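(* Let $V$ be a finite-dimensional vector space over an algebraically closed field $k$, let $G = \mathrm{GL}(V)$, and let $H$ and $K$ be subgroups of $G$, with $K$ reductive, which both preserve a direct-sum decomposition $V = \bigoplus_{i=1}^n V_i$. Suppose also that $K = K_1 \times \cdots \times K_n$ where $K_i \le \mathrm{GL}(V_i)$ for each $i$ (with $K_i$ regarded as a subgroup of $G$ acting trivially on $V_j$ for $j\neq i$). Then $H$ is relatively $G$-completely reducible with respect to $K$ if and only if $H$ is relatively $G$-completely reducible with respect to $K_i$ for all $i$.
   Context: For a cocharacter $\lambda$ of $G$, $P_\lambda = \{g \in G \mid \lim_{a\to 0}\lambda(a)g\lambda(a)^{-1} \text{ exists}\}$ and $L_\lambda = \{g \in G \mid \lim_{a\to 0}\lambda(a)g\lambda(a)^{-1} = g\}$. For a reductive subgroup $M$ of $G$, $H$ is relatively $G$-completely reducible with respect to $M$ if for every cocharacter $\lambda$ of $M$ with $H \subseteq P_\lambda$ there is a cocharacter $\mu$ of $M$ with $P_\lambda = P_\mu$ and $H \subseteq L_\mu$. *)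

theory Defs
  imports "HOL-Analysis.Analysis" "HOL-Computational_Algebra.Polynomial"
begin

definition alg_closed_field :: "'k::field itself \<Rightarrow> bool" where
  "alg_closed_field _ \<longleftrightarrow> (\<forall>p::'k poly. degree p > 0 \<longrightarrow> (\<exists>x. poly p x = 0))"

definition GL :: "('k::field^'n^'n) set" where
  "GL = {A. invertible A}"

definition is_subgroup :: "('k::field^'n^'n) set \<Rightarrow> bool" where
  "is_subgroup S \<longleftrightarrow> S \<subseteq> GL \<and> mat 1 \<in> S \<and>
     (\<forall>A\<in>S. \<forall>B\<in>S. A ** B \<in> S) \<and> (\<forall>A\<in>S. matrix_inv A \<in> S)"

inductive_set poly_fun :: "('k::field^'n^'n \<Rightarrow> 'k) set" where
  const: "(\<lambda>A. c) \<in> poly_fun"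
| coord: "(\<lambda>A. A $ i $ j) \<in> poly_fun"
| add: "f \<in> poly_fun \<Longrightarrow> g \<in> poly_fun \<Longrightarrow> (\<lambda>A. f A + g A) \<in> poly_fun"
| mult: "f \<in> poly_fun \<Longrightarrow> g \<in> poly_fun \<Longrightarrow> (\<lambda>A. f A * g A) \<in> poly_fun"

definition zariski_closed :: "('k::field^'n^'n) set \<Rightarrow> bool" where
  "zariski_closed C \<longleftrightarrow> (\<exists>F \<subseteq> poly_fun. C = {A. \<forall>f\<in>F. f A = 0})"

definition closed_in_GL :: "('k::field^'n^'n) set \<Rightarrow> bool" where
  "closed_in_GL S \<longleftrightarrow> S \<subseteq> GL \<and> (\<exists>C. zariski_closed C \<and> S = GL \<inter> C)"

definition zariski_connected :: "('k::field^'n^'n) set \<Rightarrow> bool" where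
  "zariski_connected S \<longleftrightarrow>
     \<not> (\<exists>C1 C2. zariski_closed C1 \<and> zariski_closed C2 \<and> S \<subseteq> C1 \<union> C2 \<and>
           S \<inter> C1 \<inter> C2 = {} \<and> S \<inter> C1 \<noteq> {} \<and> S \<inter> C2 \<noteq> {})"

fun matpow :: "'k::field^'n^'n \<Rightarrow> nat \<Rightarrow> 'k^'n^'n" where
  "matpow A 0 = mat 1"
| "matpow A (Suc m) = A ** matpow A m"

definition unipotent :: "'k::field^'n^'n \<Rightarrow> bool" where
  "unipotent A \<longleftrightarrow> (\<exists>m. matpow (A - mat 1) m = 0)"

definition closed_subgroup :: "('k::field^'n^'n) set \<Rightarrow> bool" where
  "closed_subgroup S \<longleftrightarrow> is_subgroup S \<and> closed_in_GL S"

definition normal_in :: "('k::field^'n^'n) set \<Rightarrow> ('k^'n^'n) set \<Rightarrow> bool" where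
  "normal_in U S \<longleftrightarrow> U \<subseteq> S \<and> (\<forall>g\<in>S. \<forall>u\<in>U. g ** u ** matrix_inv g \<in> U)"

text \<open>Reductive (not necessarily connected) linear algebraic group: a closed subgroup
  whose unipotent radical (largest connected closed normal unipotent subgroup) is trivial.\<close>
definition reductive :: "('k::field^'n^'n) set \<Rightarrow> bool" where
  "reductive K \<longleftrightarrow> closed_subgroup K \<and>
     (\<forall>U. closed_subgroup U \<and> normal_in U K \<and> zariski_connected U \<and> (\<forall>u\<in>U. unipotent u)
          \<longrightarrow> U = {mat 1})"

text \<open>A cocharacter of M: a morphism of algebraic groups G_m \<rightarrow> G with image in M.
  Morphism: entries are Laurent polynomials in a (regular functions on G_m),
  multiplicative on k^*. Values at a = 0 are irrelevant.\<close>
definition cocharacter :: "('k::field^'n^'n) set \<Rightarrow> ('k \<Rightarrow> 'k^'n^'n) \<Rightarrow> bool" where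
  "cocharacter M lam \<longleftrightarrow>
     (\<exists>N::nat. \<exists>p::'n \<Rightarrow> 'n \<Rightarrow> 'k poly. \<forall>a. a \<noteq> 0 \<longrightarrow>
         (\<forall>i j. lam a $ i $ j = poly (p i j) a / a ^ N)) \<and>
     (\<forall>a. a \<noteq> 0 \<longrightarrow> lam a \<in> M) \<and>
     (\<forall>a b. a \<noteq> 0 \<longrightarrow> b \<noteq> 0 \<longrightarrow> lam (a * b) = lam a ** lam b)"

text \<open>lim_{a\<rightarrow>0} lam(a) g lam(a)^{-1} exists: the map a \<mapsto> lam(a) g lam(a)^{-1}
  on G_m extends to a morphism on the affine line (polynomial entries);
  the limit is the value of the extension at 0.\<close>
definition has_limit :: "('k::field \<Rightarrow> 'k^'n^'n) \<Rightarrow> 'k^'n^'n \<Rightarrow> 'k^'n^'n \<Rightarrow> bool" where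
  "has_limit lam g l \<longleftrightarrow>
     (\<exists>p::'n \<Rightarrow> 'n \<Rightarrow> 'k poly.
        (\<forall>a. a \<noteq> 0 \<longrightarrow> (\<forall>i j. (lam a ** g ** matrix_inv (lam a)) $ i $ j = poly (p i j) a)) \<and>
        (\<forall>i j. l $ i $ j = poly (p i j) 0))"

definition P_of :: "('k::field \<Rightarrow> 'k^'n^'n) \<Rightarrow> ('k^'n^'n) set" where
  "P_of lam = {g \<in> GL. \<exists>l. has_limit lam g l}"

definition L_of :: "('k::field \<Rightarrow> 'k^'n^'n) \<Rightarrow> ('k^'n^'n) set" where
  "L_of lam = {g \<in> GL. has_limit lam g g}"

definition rel_Gcr :: "('k::field^'n^'n) set \<Rightarrow> ('k^'n^'n) set \<Rightarrow> bool" where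
  "rel_Gcr H M \<longleftrightarrow>
     (\<forall>lam. cocharacter M lam \<and> H \<subseteq> P_of lam \<longrightarrow>
        (\<exists>mu. cocharacter M mu \<and> P_of lam = P_of mu \<and> H \<subseteq> L_of mu))"

definition is_subspace :: "('k::field^'n) set \<Rightarrow> bool" where
  "is_subspace W \<longleftrightarrow> 0 \<in> W \<and> (\<forall>v\<in>W. \<forall>w\<in>W. v + w \<in> W) \<and> (\<forall>c. \<forall>v\<in>W. c *s v \<in> W)"

definition direct_sum_decomp :: "nat \<Rightarrow> (nat \<Rightarrow> ('k::field^'n) set) \<Rightarrow> bool" where
  "direct_sum_decomp n W \<longleftrightarrow> (\<forall>i<n. is_subspace (W i)) \<and>
     (\<forall>v. \<exists>vs. (\<forall>i<n. vs i \<in> W i) \<and> v = (\<Sum>i<n. vs i)) \<and>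
     (\<forall>vs. (\<forall>i<n. vs i \<in> W i) \<and> (\<Sum>i<n. vs i) = 0 \<longrightarrow> (\<forall>i<n. vs i = 0))"

definition preserves :: "nat \<Rightarrow> (nat \<Rightarrow> ('k::field^'n) set) \<Rightarrow> 'k^'n^'n \<Rightarrow> bool" where
  "preserves n W g \<longleftrightarrow> (\<forall>i<n. \<forall>v\<in>W i. g *v v \<in> W i)"

text \<open>Image of GL(V_i) in G: preserves the decomposition and acts trivially on V_j, j \<noteq> i.\<close>
definition acts_only_on :: "nat \<Rightarrow> (nat \<Rightarrow> ('k::field^'n) set) \<Rightarrow> nat \<Rightarrow> 'k^'n^'n \<Rightarrow> bool" where
  "acts_only_on n W i g \<longleftrightarrow> preserves n W g \<and> (\<forall>j<n. j \<noteq> i \<longrightarrow> (\<forall>v\<in>W j. g *v v = v))"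

definition prod_mats :: "nat \<Rightarrow> (nat \<Rightarrow> 'k::field^'n^'n) \<Rightarrow> 'k^'n^'n" where
  "prod_mats n ks = foldl (\<lambda>A i. A ** ks i) (mat 1) [0..<n]"

end

theory Submission
  imports Defs
begin

lemma alg_closed_infinite:
  assumes "alg_closed_field TYPE('k::field)"
  shows "infinite (UNIV :: 'k set)"
proof
  assume fin: "finite (UNIV :: 'k set)"
  define q :: "'k poly" where "q = (\<Prod>x\<in>UNIV. [:-x, 1:])"
  have dq: "degree q = card (UNIV :: 'k set)"
    unfolding q_def by (subst degree_prod_eq_sum_degree) auto
  have "card (UNIV :: 'k set) > 0" using fin by (simp add: card_gt_0_iff)
  hence dq0: "degree q > 0" using dq by simp
  define p where "p = q + 1"
  have "degree p = degree q" unfolding p_def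
    using dq0 by (simp add: degree_add_eq_left)
  with dq0 obtain x where "poly p x = 0" using assms unfolding alg_closed_field_def by metis
  moreover have "poly q x = 0" unfolding q_def poly_prod
    using fin by (intro prod_zero) auto
  ultimately show False unfolding p_def by simp
qed

lemma poly_zero_nonzero:
  assumes inf: "infinite (UNIV :: 'k::field set)"
    and h: "\<forall>a::'k. a \<noteq> 0 \<longrightarrow> poly p a = 0"
  shows "p = 0"
proof (rule ccontr)
  assume "p \<noteq> 0"
  hence "finite {x. poly p x = 0}" by (rule poly_roots_finite)
  hence "finite (insert 0 {x. poly p x = 0})" by simp
  moreover have "insert 0 {x. poly p x = 0} = UNIV" using h by auto
  ultimately show False using inf by simp
qed

lemma poly_eq_nonzero:
  assumes inf: "infinite (UNIV :: 'k::field set)"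
    and h: "\<forall>a::'k. a \<noteq> 0 \<longrightarrow> poly p a = poly q a"
  shows "p = q"
  using poly_zero_nonzero[OF inf, of "p - q"] h by auto

lemma sum_monom_zero:
  assumes inf: "infinite (UNIV :: 'k::field set)"
    and h: "\<forall>a::'k. a \<noteq> 0 \<longrightarrow> (\<Sum>k\<le>D. c k * a ^ k) = 0"
    and kD: "k \<le> D"
  shows "c k = 0"
proof -
  define p where "p = (\<Sum>k\<le>D. monom (c k) k)"
  have "\<forall>a. a \<noteq> 0 \<longrightarrow> poly p a = 0"
    using h unfolding p_def by (simp add: poly_sum poly_monom)
  hence "p = 0" by (rule poly_zero_nonzero[OF inf])
  hence "coeff p k = 0" by simp
  moreover have "coeff p k = c k" unfolding p_def coeff_sum using kD
    by (simp add: sum.delta)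
  ultimately show ?thesis by simp
qed

lemma sum_monom2_zero:
  assumes inf: "infinite (UNIV :: 'k::field set)"
    and h: "\<forall>a b::'k. a \<noteq> 0 \<longrightarrow> b \<noteq> 0 \<longrightarrow> (\<Sum>k\<le>D. \<Sum>l\<le>D. e k l * a ^ k * b ^ l) = 0"
    and kD: "k \<le> D" and lD: "l \<le> D"
  shows "e k l = 0"
proof -
  have "\<forall>b. b \<noteq> 0 \<longrightarrow> (\<Sum>l\<le>D. e k l * b ^ l) = 0"
  proof (intro allI impI)
    fix b :: 'k assume b: "b \<noteq> 0"
    have "\<forall>a. a \<noteq> 0 \<longrightarrow> (\<Sum>k\<le>D. (\<Sum>l\<le>D. e k l * b ^ l) * a ^ k) = 0"
      using h b by (auto simp: sum_distrib_right sum_distrib_left mult_ac)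
    from sum_monom_zero[OF inf this kD] show "(\<Sum>l\<le>D. e k l * b ^ l) = 0" .
  qed
  from sum_monom_zero[OF inf this lD] show ?thesis .
qed

lemma laurent_poly_cmp:
  assumes inf: "infinite (UNIV :: 'k::field set)"
    and h: "\<forall>a::'k. a \<noteq> 0 \<longrightarrow> poly q a * a ^ l = a ^ k * c"
  shows "(k < l \<longrightarrow> c = 0) \<and> poly q 0 = (if k = l then c else 0)"
proof -
  have eq: "q * monom 1 l = monom c k"
    using h by (intro poly_eq_nonzero[OF inf]) (auto simp: poly_monom mult_ac)
  have c1: "k < l \<longrightarrow> c = 0"
  proof
    assume kl: "k < l"
    have "coeff (q * monom 1 l) k = coeff (monom c k) k" using eq by simp
    moreover have "coeff (q * monom 1 l) k = 0"
      using kl by (simp add: mult.commute[of q] coeff_monom_mult)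
    ultimately show "c = 0" by simp
  qed
  have "coeff (q * monom 1 l) (0 + l) = coeff q 0" by (simp add: mult.commute[of q] coeff_monom_mult)
  hence "coeff q 0 = coeff (monom c k) l" using eq by simp
  thus ?thesis using c1 by (simp add: poly_0_coeff_0)
qed


definition sm :: "'k::field \<Rightarrow> 'k^'n^'n \<Rightarrow> 'k^'n^'n" where
  "sm c A = (\<chi> i j. c * A $ i $ j)"

lemma sm_nth[simp]: "sm c A $ i $ j = c * A $ i $ j"
  by (simp add: sm_def)

lemma mmult_nth: "((A::'k::field^'n^'n) ** B) $ i $ j = (\<Sum>k\<in>UNIV. A $ i $ k * B $ k $ j)"
  unfolding matrix_matrix_mult_def by simp

lemma matrix_add_rdistrib': "((A::'k::field^'n^'n) + B) ** (C::'k::field^'n^'n) = A ** C + B ** C"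
  unfolding vec_eq_iff mmult_nth by (simp add: mmult_nth distrib_right sum.distrib)

lemma matrix_diff_rdistrib: "((A::'k::field^'n^'n) - B) ** (C::'k::field^'n^'n) = A ** C - B ** C"
  unfolding vec_eq_iff mmult_nth by (simp add: mmult_nth left_diff_distrib sum_subtractf)

lemma matrix_diff_ldistrib: "(C::'k::field^'n^'n) ** (A - B) = C ** A - C ** B"
  unfolding vec_eq_iff mmult_nth by (simp add: mmult_nth right_diff_distrib sum_subtractf)

lemma matrix_add_ldistrib': "(C::'k::field^'n^'n) ** (A + B) = C ** A + C ** B"
  by (rule matrix_add_ldistrib)

lemma sm_mult_left[simp]: "sm c A ** (B::'k::field^'n^'n) = sm c (A ** B)"
  by (simp add: vec_eq_iff mmult_nth sum_distrib_left mult_ac)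

lemma sm_mult_right[simp]: "(A::'k::field^'n^'n) ** sm c B = sm c (A ** B)"
  by (simp add: vec_eq_iff mmult_nth sum_distrib_left mult_ac)

lemma sm_sm[simp]: "sm c (sm d A) = sm (c * d) (A::'k::field^'n^'n)"
  by (simp add: vec_eq_iff mult_ac)

lemma sm_1[simp]: "sm 1 A = (A::'k::field^'n^'n)"
  by (simp add: vec_eq_iff)

lemma sm_0[simp]: "sm 0 A = (0::'k::field^'n^'n)"
  by (simp add: vec_eq_iff)

lemma sm_zero[simp]: "sm c 0 = (0::'k::field^'n^'n)"
  by (simp add: vec_eq_iff)

lemma sm_add: "sm c (A + B) = sm c A + sm c (B::'k::field^'n^'n)"
  by (simp add: vec_eq_iff distrib_left)

lemma sm_diff: "sm c (A - B) = sm c A - sm c (B::'k::field^'n^'n)"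
  by (simp add: vec_eq_iff right_diff_distrib)

lemma sm_add_left: "sm (c + d) A = sm c A + sm d (A::'k::field^'n^'n)"
  by (simp add: vec_eq_iff distrib_right)

lemma sm_sum: "sm c (\<Sum>k\<in>S. f k) = (\<Sum>k\<in>S. sm c (f k :: 'k::field^'n^'n))"
  by (induct S rule: infinite_finite_induct) (auto simp: sm_add)

lemma sm_sum_left: "sm (\<Sum>k\<in>S. f k) A = (\<Sum>k\<in>S. sm (f k) (A :: 'k::field^'n^'n))"
  by (induct S rule: infinite_finite_induct) (auto simp: sm_add_left)

lemma sum_mult_left: "(\<Sum>k\<in>S. (f k::'k::field^'n^'n)) ** (B::'k::field^'n^'n) = (\<Sum>k\<in>S. f k ** B)"
  by (induct S rule: infinite_finite_induct) (auto simp: matrix_add_rdistrib')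

lemma sum_mult_right: "(B::'k::field^'n^'n) ** (\<Sum>k\<in>S. f k) = (\<Sum>k\<in>S. B ** f k)"
  by (induct S rule: infinite_finite_induct) (auto simp: matrix_add_ldistrib)

lemma sum_nth2: "(\<Sum>k\<in>S. f k) $ i $ j = (\<Sum>k\<in>S. (f k :: 'k::field^'n^'n) $ i $ j)"
  by (induct S rule: infinite_finite_induct) auto

lemma mat1_nth: "(mat 1 :: 'k::field^'n^'n) $ i $ j = (if i = j then 1 else 0)"
  by (simp add: mat_def)

lemma sm_mat1_mult: "sm c (mat 1) ** A = sm c (A::'k::field^'n^'n)"
  by simp

lemma matrix_inv_eq:
  fixes A B :: "'k::field^'n^'n"
  assumes "A ** B = mat 1"
  shows "matrix_inv A = B"
proof -
  have BA: "B ** A = mat 1" using assms matrix_left_right_inverse by blast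
  have "\<exists>A'. A ** A' = mat 1 \<and> A' ** A = mat 1" using assms BA by blast
  hence "A ** matrix_inv A = mat 1 \<and> matrix_inv A ** A = mat 1"
    unfolding matrix_inv_def by (rule someI_ex)
  hence "matrix_inv A = matrix_inv A ** (A ** B)" using assms by simp
  also have "\<dots> = B" using \<open>A ** matrix_inv A = mat 1 \<and> matrix_inv A ** A = mat 1\<close>
    by (simp add: matrix_mul_assoc)
  finally show ?thesis .
qed

lemma invertibleI2: "A ** B = mat 1 \<Longrightarrow> invertible (A::'k::field^'n^'n)"
  using invertible_right_inverse by blast

lemma matrix_inv_props:
  fixes A :: "'k::field^'n^'n"
  assumes "invertible A"
  shows "A ** matrix_inv A = mat 1" "matrix_inv A ** A = mat 1"
proof -
  have "A ** matrix_inv A = mat 1 \<and> matrix_inv A ** A = mat 1"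
    using assms unfolding matrix_inv_def invertible_def by (rule someI_ex)
  thus "A ** matrix_inv A = mat 1" "matrix_inv A ** A = mat 1" by auto
qed

lemma all_sandwich_zero:
  fixes A B :: "'k::field^'n^'n"
  assumes "\<forall>X. A ** X ** B = 0"
  shows "A = 0 \<or> B = 0"
proof (rule ccontr)
  assume "\<not> (A = 0 \<or> B = 0)"
  then obtain i j s t where a: "A $ i $ j \<noteq> 0" and b: "B $ s $ t \<noteq> 0"
    by (auto simp: vec_eq_iff)
  define X :: "'k^'n^'n" where "X = (\<chi> r c. if r = j \<and> c = s then 1 else 0)"
  have "(A ** X ** B) $ i $ t = (\<Sum>k\<in>UNIV. (\<Sum>m\<in>UNIV. A $ i $ m * X $ m $ k) * B $ k $ t)"
    unfolding mmult_nth ..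
  also have "\<dots> = (\<Sum>k\<in>UNIV. (if k = s then A $ i $ j else 0) * B $ k $ t)"
    by (rule sum.cong) (auto simp: X_def if_distrib if_distribR sum.delta cong: if_cong)
  also have "\<dots> = A $ i $ j * B $ s $ t"
    by (simp add: if_distrib if_distribR sum.delta cong: if_cong)
  also have "\<dots> \<noteq> 0" using a b by simp
  finally show False using assms by simp
qed

definition pm :: "('n \<Rightarrow> 'n \<Rightarrow> 'k::field poly) \<Rightarrow> 'k \<Rightarrow> 'k^'n^'n" where
  "pm P a = (\<chi> i j. poly (P i j) a)"

lemma pm_nth[simp]: "pm P a $ i $ j = poly (P i j) a"
  by (simp add: pm_def)

lemma pm_sandwich:
  fixes A B :: "'k::field^'n^'n"
  shows "A ** pm P a ** B = pm (\<lambda>i j. \<Sum>s\<in>UNIV. \<Sum>t\<in>UNIV. smult (A $ i $ s * B $ t $ j) (P s t)) a"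
proof -
  have "(A ** pm P a ** B) $ i $ j = (\<Sum>s\<in>UNIV. \<Sum>t\<in>UNIV. A $ i $ s * B $ t $ j * poly (P s t) a)" for i j
  proof -
    have "(A ** pm P a ** B) $ i $ j = (\<Sum>t\<in>UNIV. \<Sum>s\<in>UNIV. A $ i $ s * poly (P s t) a * B $ t $ j)"
      by (simp add: mmult_nth sum_distrib_right)
    also have "\<dots> = (\<Sum>s\<in>UNIV. \<Sum>t\<in>UNIV. A $ i $ s * poly (P s t) a * B $ t $ j)"
      by (rule sum.swap)
    finally show ?thesis by (simp add: mult_ac)
  qed
  thus ?thesis by (simp add: vec_eq_iff poly_sum)
qed

lemma det_pm: "\<exists>q. \<forall>a. det (pm (P::'n::finite \<Rightarrow> 'n \<Rightarrow> 'k::field poly) a) = poly q a"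
proof -
  define q where "q = (\<Sum>p\<in>{p. p permutes (UNIV::'n set)}. smult (of_int (sign p)) (\<Prod>i\<in>UNIV. P i (p i)))"
  have "\<forall>a. det (pm P a) = poly q a"
    by (simp add: q_def det_def poly_sum poly_prod)
  thus ?thesis by blast
qed


section \<open>Laurent curves and weight decompositions\<close>

definition lcurve :: "nat \<Rightarrow> nat \<Rightarrow> (nat \<Rightarrow> 'k::field^'n^'n) \<Rightarrow> 'k \<Rightarrow> 'k^'n^'n" where
  "lcurve N D C a = (\<Sum>k\<le>D. sm (a ^ k / a ^ N) (C k))"

definition decomp :: "nat \<Rightarrow> (nat \<Rightarrow> 'k::field^'n^'n) \<Rightarrow> bool" where
  "decomp D C \<longleftrightarrow> (\<forall>k>D. C k = 0) \<and> (\<forall>k l. C k ** C l = (if k = l then C k else 0))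
     \<and> (\<Sum>k\<le>D. C k) = mat 1"

lemma decompD:
  assumes "decomp D C"
  shows "\<And>k. D < k \<Longrightarrow> C k = 0" "\<And>k l. C k ** C l = (if k = l then C k else 0)"
    "(\<Sum>k\<le>D. C k) = mat 1"
  using assms unfolding decomp_def by auto

lemma sum_collapse:
  fixes g :: "nat \<Rightarrow> 'k::field^'n^'n"
  assumes "k \<le> D"
  shows "(\<Sum>l\<le>D. if k = l then g l else 0) = g k"
  using assms by (simp add: sum.delta)

lemma lcurve_mult:
  fixes C :: "nat \<Rightarrow> 'k::field^'n^'n"
  assumes dc: "decomp D C" and a: "a \<noteq> 0" and b: "b \<noteq> 0"
  shows "lcurve N D C (a * b) = lcurve N D C a ** lcurve N D C b"
proof -
  have "lcurve N D C a ** lcurve N D C b =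
      (\<Sum>k\<le>D. \<Sum>l\<le>D. sm (a ^ k / a ^ N * (b ^ l / b ^ N)) (C k ** C l))"
    unfolding lcurve_def by (subst sum_mult_left, subst sum_mult_right, simp add: mult_ac)
  also have "\<dots> = (\<Sum>k\<le>D. \<Sum>l\<le>D. if k = l then sm (a ^ k / a ^ N * (b ^ l / b ^ N)) (C l) else 0)"
    using decompD(2)[OF dc] by (intro sum.cong refl) auto
  also have "\<dots> = (\<Sum>k\<le>D. sm (a ^ k / a ^ N * (b ^ k / b ^ N)) (C k))"
    by (intro sum.cong refl) (simp add: sum.delta)
  also have "\<dots> = lcurve N D C (a * b)"
    unfolding lcurve_def by (intro sum.cong refl) (simp add: power_mult_distrib)
  finally show ?thesis by simp
qed

lemma lcurve_one:
  assumes "decomp D C"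
  shows "lcurve N D C 1 = mat 1"
  using decompD(3)[OF assms] unfolding lcurve_def by simp

lemma lcurve_inv:
  fixes C :: "nat \<Rightarrow> 'k::field^'n^'n"
  assumes dc: "decomp D C" and a: "a \<noteq> 0"
  shows "lcurve N D C a ** lcurve N D C (inverse a) = mat 1"
    "invertible (lcurve N D C a)"
    "matrix_inv (lcurve N D C a) = lcurve N D C (inverse a)"
proof -
  show 1: "lcurve N D C a ** lcurve N D C (inverse a) = mat 1"
    using lcurve_mult[OF dc a, of "inverse a" N] a lcurve_one[OF dc] by simp
  show "invertible (lcurve N D C a)" using 1 by (rule invertibleI2)
  show "matrix_inv (lcurve N D C a) = lcurve N D C (inverse a)" using 1 by (rule matrix_inv_eq)
qed

lemma lcurve_laurent:
  "lcurve N D C a $ i $ j = poly (\<Sum>k\<le>D. monom (C k $ i $ j) k) a / a ^ N"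
  unfolding lcurve_def sum_nth2 by (simp add: poly_sum poly_monom sum_divide_distrib mult_ac)

lemma cochar_of_decomp:
  fixes C :: "nat \<Rightarrow> 'k::field^'n^'n"
  assumes dc: "decomp D C" and M: "\<forall>a. a \<noteq> 0 \<longrightarrow> lcurve N D C a \<in> M"
  shows "cocharacter M (lcurve N D C)"
  unfolding cocharacter_def
proof (intro conjI)
  show "\<exists>N'::nat. \<exists>p::'n \<Rightarrow> 'n \<Rightarrow> 'k poly. \<forall>a. a \<noteq> 0 \<longrightarrow>
         (\<forall>i j. lcurve N D C a $ i $ j = poly (p i j) a / a ^ N')"
    apply (rule exI[of _ N])
    apply (rule exI[of _ "\<lambda>i j. \<Sum>k\<le>D. monom (C k $ i $ j) k"])
    apply (intro allI impI)
    apply (rule lcurve_laurent)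
    done
  show "\<forall>a. a \<noteq> 0 \<longrightarrow> lcurve N D C a \<in> M" by (rule M)
  show "\<forall>a b. a \<noteq> 0 \<longrightarrow> b \<noteq> 0 \<longrightarrow> lcurve N D C (a * b) = lcurve N D C a ** lcurve N D C b"
    using lcurve_mult[OF dc] by blast
qed

lemma decomp_mono:
  assumes dc: "decomp D C" and "D \<le> D'"
  shows "decomp D' C" "lcurve N D' C = lcurve N D C"
proof -
  have z: "\<And>k. D < k \<Longrightarrow> C k = 0" by (rule decompD(1)[OF dc])
  have s: "(\<Sum>k\<le>D'. C k) = (\<Sum>k\<le>D. C k)"
    using assms(2) z by (intro sum.mono_neutral_right) auto
  show "decomp D' C" using dc assms(2) s unfolding decomp_def by auto
  show "lcurve N D' C = lcurve N D C"
    using assms(2) z unfolding lcurve_def by (intro ext sum.mono_neutral_right) auto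
qed

lemma poly_sum_upto:
  assumes "degree p \<le> D"
  shows "poly p (x::'k::field) = (\<Sum>k\<le>D. coeff p k * x ^ k)"
proof -
  have "poly p x = (\<Sum>k\<le>degree p. coeff p k * x ^ k)" by (rule poly_altdef)
  also have "\<dots> = (\<Sum>k\<le>D. coeff p k * x ^ k)"
    using assms by (intro sum.mono_neutral_left) (auto simp: coeff_eq_0)
  finally show ?thesis .
qed


lemma decomp_of_cochar:
  fixes lam :: "'k::field \<Rightarrow> 'k^'n^'n"
  assumes inf: "infinite (UNIV :: 'k set)"
    and co: "cocharacter M lam" and MG: "M \<subseteq> GL"
  shows "\<exists>N D C. decomp D C \<and> (\<forall>a. a \<noteq> 0 \<longrightarrow> lam a = lcurve N D C a)"
proof -
  have c1: "\<exists>N::nat. \<exists>p::'n \<Rightarrow> 'n \<Rightarrow> 'k poly. \<forall>a. a \<noteq> 0 \<longrightarrow>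
         (\<forall>i j. lam a $ i $ j = poly (p i j) a / a ^ N)"
    and lM: "\<forall>a. a \<noteq> 0 \<longrightarrow> lam a \<in> M"
    and lmult: "\<forall>a b. a \<noteq> 0 \<longrightarrow> b \<noteq> 0 \<longrightarrow> lam (a * b) = lam a ** lam b"
    using co unfolding cocharacter_def by simp_all
  from c1 obtain N p where lp: "\<forall>a. a \<noteq> 0 \<longrightarrow> (\<forall>i j. lam a $ i $ j = poly (p i j) a / a ^ N)"
    by (elim exE)
  define D where "D = Max (range (\<lambda>(i, j). degree (p i j)))"
  have degD: "degree (p i j) \<le> D" for i j
    unfolding D_def by (rule Max_ge) auto
  define C :: "nat \<Rightarrow> 'k^'n^'n" where "C k = (\<chi> i j. coeff (p i j) k)" for k
  have Cz: "C k = 0" if "D < k" for k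
    using that unfolding C_def by (auto simp: vec_eq_iff intro!: coeff_eq_0 order.strict_trans1[OF degD])
  have lc: "lam a = lcurve N D C a" if a: "a \<noteq> 0" for a
  proof -
    have "lam a $ i $ j = lcurve N D C a $ i $ j" for i j
      using lp a unfolding lcurve_def sum_nth2
      by (simp add: poly_sum_upto[OF degD] C_def sum_divide_distrib mult_ac)
    thus ?thesis by (simp add: vec_eq_iff)
  qed
  have l1M: "lam 1 \<in> GL" using lM MG by auto
  have l1: "lam 1 = mat 1"
  proof -
    have e: "lam 1 = lam 1 ** lam 1" using lmult[rule_format, of 1 1] by simp
    have inv: "invertible (lam 1)" using l1M unfolding GL_def by simp
    have "mat 1 = matrix_inv (lam 1) ** lam 1" using matrix_inv_props(2)[OF inv] by simp
    also have "\<dots> = matrix_inv (lam 1) ** (lam 1 ** lam 1)" using e by simp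
    also have "\<dots> = lam 1" using matrix_inv_props(2)[OF inv] by (simp add: matrix_mul_assoc)
    finally show ?thesis by simp
  qed
  have sum1: "(\<Sum>k\<le>D. C k) = mat 1"
    using lc[of 1] l1 unfolding lcurve_def by simp
  define E where "E k l = (if k = l then C k else 0) - C k ** C l" for k l
  have Ez: "\<forall>a b. a \<noteq> 0 \<longrightarrow> b \<noteq> 0 \<longrightarrow> (\<Sum>k\<le>D. \<Sum>l\<le>D. sm (a ^ k * b ^ l) (E k l)) = 0"
  proof (intro allI impI)
    fix a b :: 'k assume a: "a \<noteq> 0" and b: "b \<noteq> 0"
    have ab: "a * b \<noteq> 0" using a b by simp
    have "lcurve N D C (a * b) = lcurve N D C a ** lcurve N D C b"
      using lmult a b lc ab by metis
    moreover have "lcurve N D C a ** lcurve N D C b =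
      (\<Sum>k\<le>D. \<Sum>l\<le>D. sm (a ^ k / a ^ N * (b ^ l / b ^ N)) (C k ** C l))"
      unfolding lcurve_def by (subst sum_mult_left, subst sum_mult_right, simp add: mult_ac)
    moreover have "lcurve N D C (a * b) =
      (\<Sum>k\<le>D. \<Sum>l\<le>D. sm (a ^ k / a ^ N * (b ^ l / b ^ N)) (if k = l then C k else 0))"
      unfolding lcurve_def
      by (intro sum.cong refl) (simp add: power_mult_distrib if_distrib sum.delta cong: if_cong)
    ultimately have "(\<Sum>k\<le>D. \<Sum>l\<le>D. sm (a ^ k / a ^ N * (b ^ l / b ^ N)) (E k l)) = 0"
      unfolding E_def by (simp add: sm_diff sum_subtractf)
    hence "sm (a ^ N * b ^ N) (\<Sum>k\<le>D. \<Sum>l\<le>D. sm (a ^ k / a ^ N * (b ^ l / b ^ N)) (E k l)) = 0"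
      by simp
    thus "(\<Sum>k\<le>D. \<Sum>l\<le>D. sm (a ^ k * b ^ l) (E k l)) = 0"
      using a b by (simp add: sm_sum field_simps)
  qed
  have Ekl: "E k l = 0" if "k \<le> D" "l \<le> D" for k l
  proof -
    have "E k l $ i $ j = 0" for i j
    proof -
      have "\<forall>a b. a \<noteq> 0 \<longrightarrow> b \<noteq> 0 \<longrightarrow> (\<Sum>k\<le>D. \<Sum>l\<le>D. E k l $ i $ j * a ^ k * b ^ l) = 0"
      proof (intro allI impI)
        fix a b :: 'k assume "a \<noteq> 0" "b \<noteq> 0"
        hence "(\<Sum>k\<le>D. \<Sum>l\<le>D. sm (a ^ k * b ^ l) (E k l)) $ i $ j = 0" using Ez by simp
        thus "(\<Sum>k\<le>D. \<Sum>l\<le>D. E k l $ i $ j * a ^ k * b ^ l) = 0"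
          unfolding sum_nth2 by (simp add: mult_ac)
      qed
      from sum_monom2_zero[OF inf this that] show ?thesis .
    qed
    thus ?thesis by (simp add: vec_eq_iff)
  qed
  have orth: "C k ** C l = (if k = l then C k else 0)" for k l
  proof (cases "k \<le> D \<and> l \<le> D")
    case True thus ?thesis using Ekl[of k l] unfolding E_def by simp
  next
    case False thus ?thesis using Cz by auto
  qed
  have "decomp D C" unfolding decomp_def using Cz orth sum1 by auto
  thus ?thesis using lc by blast
qed


section \<open>Limits, P and L in terms of a weight decomposition\<close>

lemma if_nth2: "(if c then A else B) $ i $ j = (if c then A $ i $ j else B $ i $ j)"
  by simp

definition pset :: "(nat \<Rightarrow> 'k::field^'n^'n) \<Rightarrow> 'k^'n^'n \<Rightarrow> bool" where
  "pset C g \<longleftrightarrow> (\<forall>k l. k < l \<longrightarrow> C k ** g ** C l = 0)"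

lemma coef_inv_simp:
  fixes a :: "'k::field"
  assumes "a \<noteq> 0"
  shows "a ^ k / a ^ N * (inverse a ^ l / inverse a ^ N) = a ^ k / a ^ l"
  using assms by (simp add: power_inverse field_simps)

lemma conj_expand:
  fixes C :: "nat \<Rightarrow> 'k::field^'n^'n"
  assumes dc: "decomp D C" and a: "a \<noteq> 0"
  shows "lcurve N D C a ** X ** matrix_inv (lcurve N D C a) =
    (\<Sum>k\<le>D. \<Sum>l\<le>D. sm (a ^ k / a ^ l) (C k ** X ** C l))"
proof -
  have "lcurve N D C a ** X ** matrix_inv (lcurve N D C a) =
        lcurve N D C a ** X ** lcurve N D C (inverse a)"
    using lcurve_inv(3)[OF dc a] by simp
  also have "\<dots> = (\<Sum>k\<le>D. \<Sum>l\<le>D. sm (a ^ k / a ^ N * (inverse a ^ l / inverse a ^ N)) (C k ** X ** C l))"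
    unfolding lcurve_def
    by (simp only: sum_mult_left, simp only: sum_mult_right, simp add: ac_simps)
  also have "\<dots> = (\<Sum>k\<le>D. \<Sum>l\<le>D. sm (a ^ k / a ^ l) (C k ** X ** C l))"
    using coef_inv_simp[OF a] by simp
  finally show ?thesis .
qed

lemma sandwich_pick:
  fixes C :: "nat \<Rightarrow> 'k::field^'n^'n"
  assumes dc: "decomp D C" and p: "p \<le> D" and q: "q \<le> D"
  shows "C p ** (\<Sum>k\<le>D. \<Sum>l\<le>D. sm (f k l) (C k ** X ** C l)) ** C q = sm (f p q) (C p ** X ** C q)"
proof -
  have e: "C p ** (C k ** X ** C l) ** C q = (if p = k \<and> l = q then C p ** X ** C q else 0)" for k l
  proof -
    have "C p ** (C k ** X ** C l) ** C q = (C p ** C k) ** X ** (C l ** C q)"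
      by (simp add: matrix_mul_assoc)
    thus ?thesis using decompD(2)[OF dc] by auto
  qed
  have "C p ** (\<Sum>k\<le>D. \<Sum>l\<le>D. sm (f k l) (C k ** X ** C l)) ** C q =
      (\<Sum>k\<le>D. \<Sum>l\<le>D. sm (f k l) (C p ** (C k ** X ** C l) ** C q))"
    by (simp add: sum_mult_left sum_mult_right)
  also have "\<dots> = (\<Sum>k\<le>D. \<Sum>l\<le>D. if p = k \<and> l = q then sm (f p q) (C p ** X ** C q) else 0)"
    unfolding e by (intro sum.cong refl) auto
  also have "\<dots> = (\<Sum>k\<le>D. if p = k then sm (f p q) (C p ** X ** C q) else 0)"
  proof (intro sum.cong refl)
    fix k show "(\<Sum>l\<le>D. if p = k \<and> l = q then sm (f p q) (C p ** X ** C q) else 0) =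
       (if p = k then sm (f p q) (C p ** X ** C q) else 0)"
      using q by (cases "p = k") (simp_all add: sum.delta)
  qed
  also have "\<dots> = sm (f p q) (C p ** X ** C q)"
    using p by (simp add: sum.delta')
  finally show ?thesis .
qed

lemma sandwich_sum:
  fixes C :: "nat \<Rightarrow> 'k::field^'n^'n"
  assumes dc: "decomp D C"
  shows "X = (\<Sum>k\<le>D. \<Sum>l\<le>D. C k ** X ** C l)"
proof -
  have "X = (\<Sum>k\<le>D. C k) ** X ** (\<Sum>l\<le>D. C l)" using decompD(3)[OF dc] by simp
  also have "\<dots> = (\<Sum>k\<le>D. \<Sum>l\<le>D. C k ** X ** C l)"
    by (simp only: sum_mult_left, simp only: sum_mult_right)
  finally show ?thesis .
qed

lemma has_limit_iff:
  fixes C :: "nat \<Rightarrow> 'k::field^'n^'n"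
  assumes inf: "infinite (UNIV :: 'k set)"
    and dc: "decomp D C" and lam: "\<forall>a. a \<noteq> 0 \<longrightarrow> lam a = lcurve N D C a"
  shows "has_limit lam X L \<longleftrightarrow> pset C X \<and> L = (\<Sum>k\<le>D. C k ** X ** C k)"
proof
  assume hl: "has_limit lam X L"
  then obtain P where P: "\<forall>a. a \<noteq> 0 \<longrightarrow> (\<forall>i j. (lam a ** X ** matrix_inv (lam a)) $ i $ j = poly (P i j) a)"
    and L: "\<forall>i j. L $ i $ j = poly (P i j) 0"
    unfolding has_limit_def by blast
  have Lpm: "L = pm P 0" using L by (simp add: vec_eq_iff)
  have conj: "lam a ** X ** matrix_inv (lam a) = pm P a" if "a \<noteq> 0" for a
    using P that by (simp add: vec_eq_iff)
  have key: "(\<forall>c. p < q \<longrightarrow> (C p ** X ** C q) = 0) \<and> C p ** L ** C q = (if p = q then C p ** X ** C q else 0)"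
    if p: "p \<le> D" and q: "q \<le> D" for p q
  proof -
    define Q where "Q = (\<lambda>i j. \<Sum>s\<in>UNIV. \<Sum>t\<in>UNIV. smult (C p $ i $ s * C q $ t $ j) (P s t))"
    have eq: "pm Q a = sm (a ^ p / a ^ q) (C p ** X ** C q)" if a: "a \<noteq> 0" for a
    proof -
      have "pm Q a = C p ** pm P a ** C q" unfolding Q_def by (rule pm_sandwich[symmetric])
      also have "\<dots> = C p ** (lam a ** X ** matrix_inv (lam a)) ** C q" using conj[OF a] by simp
      also have "\<dots> = C p ** (\<Sum>k\<le>D. \<Sum>l\<le>D. sm (a ^ k / a ^ l) (C k ** X ** C l)) ** C q"
        using lam a conj_expand[OF dc a] by simp
      also have "\<dots> = sm (a ^ p / a ^ q) (C p ** X ** C q)"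
        by (rule sandwich_pick[OF dc p q])
      finally show ?thesis .
    qed
    have ent: "(p < q \<longrightarrow> (C p ** X ** C q) $ i $ j = 0) \<and>
        poly (Q i j) 0 = (if p = q then (C p ** X ** C q) $ i $ j else 0)" for i j
    proof -
      have "\<forall>a. a \<noteq> 0 \<longrightarrow> poly (Q i j) a * a ^ q = a ^ p * (C p ** X ** C q) $ i $ j"
      proof (intro allI impI)
        fix a :: 'k assume a: "a \<noteq> 0"
        have "poly (Q i j) a = a ^ p / a ^ q * (C p ** X ** C q) $ i $ j"
          using eq[OF a] by (metis pm_nth sm_nth)
        thus "poly (Q i j) a * a ^ q = a ^ p * (C p ** X ** C q) $ i $ j"
          using a by (simp add: field_simps)
      qed
      from laurent_poly_cmp[OF inf this] show ?thesis .
    qed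
    have "C p ** L ** C q = pm Q 0" unfolding Lpm Q_def by (rule pm_sandwich)
    hence "C p ** L ** C q = (if p = q then C p ** X ** C q else 0)"
      using ent by (auto simp: vec_eq_iff)
    moreover have "p < q \<longrightarrow> C p ** X ** C q = 0" using ent by (auto simp: vec_eq_iff)
    ultimately show ?thesis by blast
  qed
  have ps: "pset C X"
    unfolding pset_def
  proof (intro allI impI)
    fix k l :: nat assume kl: "k < l"
    show "C k ** X ** C l = 0"
    proof (cases "l \<le> D")
      case True thus ?thesis using key[of k l] kl by auto
    next
      case False thus ?thesis using decompD(1)[OF dc, of l] by simp
    qed
  qed
  have "L = (\<Sum>k\<le>D. \<Sum>l\<le>D. C k ** L ** C l)" by (rule sandwich_sum[OF dc])
  also have "\<dots> = (\<Sum>k\<le>D. \<Sum>l\<le>D. if k = l then C k ** X ** C k else 0)"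
    using key by (intro sum.cong refl) auto
  also have "\<dots> = (\<Sum>k\<le>D. C k ** X ** C k)"
    by (intro sum.cong refl) (simp add: sum.delta)
  finally show "pset C X \<and> L = (\<Sum>k\<le>D. C k ** X ** C k)" using ps by blast
next
  assume r: "pset C X \<and> L = (\<Sum>k\<le>D. C k ** X ** C k)"
  define P where "P = (\<lambda>i j. \<Sum>k\<le>D. \<Sum>l\<le>D. if l \<le> k then monom ((C k ** X ** C l) $ i $ j) (k - l) else 0)"
  have "lam a ** X ** matrix_inv (lam a) = pm P a" if a: "a \<noteq> 0" for a
  proof -
    have "lam a ** X ** matrix_inv (lam a) = (\<Sum>k\<le>D. \<Sum>l\<le>D. sm (a ^ k / a ^ l) (C k ** X ** C l))"
      using lam a conj_expand[OF dc a] by simp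
    also have "\<dots> = (\<Sum>k\<le>D. \<Sum>l\<le>D. if l \<le> k then sm (a ^ (k - l)) (C k ** X ** C l) else 0)"
    proof (intro sum.cong refl)
      fix k l assume "k \<in> {..D}" "l \<in> {..D}"
      show "sm (a ^ k / a ^ l) (C k ** X ** C l) = (if l \<le> k then sm (a ^ (k - l)) (C k ** X ** C l) else 0)"
      proof (cases "l \<le> k")
        case True thus ?thesis using a by (simp add: power_diff)
      next
        case False thus ?thesis using r unfolding pset_def by simp
      qed
    qed
    also have "\<dots> = pm P a"
      unfolding P_def vec_eq_iff pm_nth sum_nth2 poly_sum if_nth2
      by (auto intro!: sum.cong simp: poly_monom mult_ac)
    finally show ?thesis .
  qed
  moreover have "L = pm P 0"
  proof -
    have "pm P 0 = (\<Sum>k\<le>D. \<Sum>l\<le>D. if l = k then C k ** X ** C l else 0)"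
      unfolding P_def vec_eq_iff pm_nth sum_nth2 poly_sum if_nth2
      by (auto intro!: sum.cong simp: poly_monom power_0_left)
    also have "\<dots> = (\<Sum>k\<le>D. C k ** X ** C k)"
      by (intro sum.cong refl) (simp add: sum.delta')
    finally show ?thesis using r by simp
  qed
  ultimately show "has_limit lam X L" unfolding has_limit_def
    by (intro exI[of _ P]) simp
qed

lemma P_of_iff:
  fixes C :: "nat \<Rightarrow> 'k::field^'n^'n"
  assumes inf: "infinite (UNIV :: 'k set)"
    and dc: "decomp D C" and lam: "\<forall>a. a \<noteq> 0 \<longrightarrow> lam a = lcurve N D C a"
  shows "g \<in> P_of lam \<longleftrightarrow> g \<in> GL \<and> pset C g"
  unfolding P_of_def using has_limit_iff[OF inf dc lam] by auto

lemma L_of_iff: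
  fixes C :: "nat \<Rightarrow> 'k::field^'n^'n"
  assumes inf: "infinite (UNIV :: 'k set)"
    and dc: "decomp D C" and lam: "\<forall>a. a \<noteq> 0 \<longrightarrow> lam a = lcurve N D C a"
  shows "g \<in> L_of lam \<longleftrightarrow> g \<in> GL \<and> (\<forall>k. C k ** g = g ** C k)"
proof -
  have pick: "C m ** (\<Sum>k\<le>D. C k ** g ** C k) = C m ** g ** C m"
    "(\<Sum>k\<le>D. C k ** g ** C k) ** C m = C m ** g ** C m" for m
  proof -
    have "C m ** (\<Sum>k\<le>D. C k ** g ** C k) = (\<Sum>k\<le>D. if k = m then C m ** g ** C m else 0)"
      unfolding sum_mult_right
      by (intro sum.cong refl) (auto simp: matrix_mul_assoc decompD(2)[OF dc])
    also have "\<dots> = C m ** g ** C m"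
      using decompD(1)[OF dc, of m] by (cases "m \<le> D") (auto simp: sum.delta')
    finally show "C m ** (\<Sum>k\<le>D. C k ** g ** C k) = C m ** g ** C m" .
    have "(\<Sum>k\<le>D. C k ** g ** C k) ** C m = (\<Sum>k\<le>D. if k = m then C m ** g ** C m else 0)"
      unfolding sum_mult_left
      by (intro sum.cong refl) (auto simp: matrix_mul_assoc[symmetric] decompD(2)[OF dc])
    also have "\<dots> = C m ** g ** C m"
      using decompD(1)[OF dc, of m] by (cases "m \<le> D") (auto simp: sum.delta')
    finally show "(\<Sum>k\<le>D. C k ** g ** C k) ** C m = C m ** g ** C m" .
  qed
  show ?thesis
  proof
    assume "g \<in> L_of lam"
    hence g: "g \<in> GL" "g = (\<Sum>k\<le>D. C k ** g ** C k)"
      unfolding L_of_def using has_limit_iff[OF inf dc lam] by auto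
    have "C m ** g = g ** C m" for m
      using pick[of m] g(2) by metis
    thus "g \<in> GL \<and> (\<forall>k. C k ** g = g ** C k)" using g by blast
  next
    assume r: "g \<in> GL \<and> (\<forall>k. C k ** g = g ** C k)"
    have ps: "pset C g" unfolding pset_def
    proof (intro allI impI)
      fix k l :: nat assume "k < l"
      have "C k ** g ** C l = g ** (C k ** C l)" using r by (simp add: matrix_mul_assoc)
      thus "C k ** g ** C l = 0" using decompD(2)[OF dc, of k l] \<open>k < l\<close> by simp
    qed
    have "(\<Sum>k\<le>D. C k ** g ** C k) = (\<Sum>k\<le>D. g ** C k)"
    proof (intro sum.cong refl)
      fix k
      have "C k ** g ** C k = g ** (C k ** C k)" using r by (simp add: matrix_mul_assoc)
      thus "C k ** g ** C k = g ** C k" using decompD(2)[OF dc, of k k] by simp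
    qed
    also have "\<dots> = g" using decompD(3)[OF dc] by (simp add: sum_mult_right[symmetric])
    finally have "has_limit lam g g" using has_limit_iff[OF inf dc lam] ps by simp
    thus "g \<in> L_of lam" unfolding L_of_def using r by simp
  qed
qed


lemma pset_add: "pset C A \<Longrightarrow> pset C B \<Longrightarrow> pset C (A + B)"
  unfolding pset_def by (simp add: matrix_add_ldistrib matrix_add_rdistrib')

lemma pset_diff: "pset C A \<Longrightarrow> pset C B \<Longrightarrow> pset C (A - B)"
  unfolding pset_def by (simp add: matrix_diff_ldistrib matrix_diff_rdistrib)

lemma pset_sm: "pset C A \<Longrightarrow> pset C (sm c A)"
  unfolding pset_def by simp

lemma pset_sm_iff: "c \<noteq> 0 \<Longrightarrow> pset C (sm c A) \<longleftrightarrow> pset C A"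
proof
  assume c: "c \<noteq> 0" and h: "pset C (sm c A)"
  have "pset C (sm (inverse c) (sm c A))" by (rule pset_sm[OF h])
  thus "pset C A" using c by simp
qed (rule pset_sm)

lemma pset_one: "decomp D C \<Longrightarrow> pset C (mat 1)"
  unfolding pset_def using decompD(2) by fastforce

lemma exists_c_invertible:
  fixes Y :: "'k::field^'n^'n"
  assumes inf: "infinite (UNIV :: 'k set)"
  shows "\<exists>c. c \<noteq> 0 \<and> invertible (mat 1 + sm c Y)"
proof -
  define P where "P = (\<lambda>i j. [: (mat 1 :: 'k^'n^'n) $ i $ j, Y $ i $ j :])"
  have pmP: "pm P c = mat 1 + sm c Y" for c
    unfolding P_def by (simp add: vec_eq_iff mult_ac)
  obtain q where q: "\<forall>c. det (pm P c) = poly q c" using det_pm by blast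
  have "poly q 0 = 1" using q[rule_format, of 0] pmP[of 0] by simp
  hence "q \<noteq> 0" by auto
  hence "finite {x. poly q x = 0}" by (rule poly_roots_finite)
  hence "finite (insert 0 {x. poly q x = 0})" by simp
  then obtain c where "c \<notin> insert 0 {x. poly q x = 0}"
    using inf by (metis ex_new_if_finite)
  hence "c \<noteq> 0" "det (mat 1 + sm c Y) \<noteq> 0" using q pmP by auto
  thus ?thesis using invertible_det_nz by blast
qed

lemma pset_from_P1:
  fixes C E :: "nat \<Rightarrow> 'k::field^'n^'n"
  assumes inf: "infinite (UNIV :: 'k set)"
    and dc: "decomp D C" and de: "decomp D' E"
    and PP: "\<forall>g. g \<in> GL \<longrightarrow> pset C g \<longrightarrow> pset E g"
    and Y: "pset C Y"
  shows "pset E Y"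
proof -
  obtain c where c: "c \<noteq> 0" "invertible (mat 1 + sm c Y)" using exists_c_invertible[OF inf] by blast
  have "pset C (mat 1 + sm c Y)" using pset_add[OF pset_one[OF dc] pset_sm[OF Y]] .
  hence "pset E (mat 1 + sm c Y)" using PP c(2) unfolding GL_def by blast
  hence "pset E (mat 1 + sm c Y - mat 1)" using pset_diff pset_one[OF de] by blast
  hence "pset E (sm c Y)" by simp
  thus ?thesis using pset_sm_iff[OF c(1)] by blast
qed

section \<open>Filtrations\<close>

definition cge :: "nat \<Rightarrow> (nat \<Rightarrow> 'k::field^'n^'n) \<Rightarrow> nat \<Rightarrow> 'k^'n^'n" where
  "cge D C w = (\<Sum>k\<in>{w..D}. C k)"

lemma cge_mult_C:
  assumes dc: "decomp D C"
  shows "cge D C w ** C l = (if w \<le> l \<and> l \<le> D then C l else 0)"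
    "C l ** cge D C w = (if w \<le> l \<and> l \<le> D then C l else 0)"
proof -
  have "cge D C w ** C l = (\<Sum>k\<in>{w..D}. if k = l then C l else 0)"
    unfolding cge_def sum_mult_left using decompD(2)[OF dc] by (intro sum.cong refl) auto
  thus "cge D C w ** C l = (if w \<le> l \<and> l \<le> D then C l else 0)" by (simp add: sum.delta')
  have "C l ** cge D C w = (\<Sum>k\<in>{w..D}. if l = k then C l else 0)"
    unfolding cge_def sum_mult_right using decompD(2)[OF dc] by (intro sum.cong refl) auto
  thus "C l ** cge D C w = (if w \<le> l \<and> l \<le> D then C l else 0)" by (simp add: sum.delta)
qed

lemma cge_mult_cge:
  assumes dc: "decomp D C" and "j \<le> w"
  shows "cge D C j ** cge D C w = cge D C w"
proof -
  have "cge D C j ** cge D C w = (\<Sum>k\<in>{w..D}. cge D C j ** C k)"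
    unfolding cge_def[of D C w] sum_mult_right ..
  also have "\<dots> = (\<Sum>k\<in>{w..D}. C k)"
    using assms(2) by (intro sum.cong refl) (auto simp: cge_mult_C[OF dc])
  finally show ?thesis unfolding cge_def .
qed

lemma cge_Suc:
  assumes "k \<le> D"
  shows "cge D C k = C k + cge D C (Suc k)"
proof -
  have "{k..D} = insert k {Suc k..D}" using assms by auto
  thus ?thesis unfolding cge_def by simp
qed

lemma cge_split:
  fixes C :: "nat \<Rightarrow> 'k::field^'n^'n"
  assumes dc: "decomp D C"
  shows "mat 1 - cge D C w = (\<Sum>k\<in>{k. k \<le> D \<and> k < w}. C k)"
proof -
  have "{..D} = {k. k \<le> D \<and> k < w} \<union> {w..D}" by auto
  hence "mat 1 = (\<Sum>k\<in>{k. k \<le> D \<and> k < w}. C k) + cge D C w"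
    unfolding cge_def using decompD(3)[OF dc]
    by (metis (no_types, lifting) sum.union_disjoint finite_atLeastAtMost finite_nat_set_iff_bounded_le
        disjoint_iff mem_Collect_eq atLeastAtMost_iff not_le finite_atMost
        sum.subset_diff Int_iff)
  thus ?thesis by (simp add: algebra_simps)
qed

lemma pset_iff_cge:
  fixes C :: "nat \<Rightarrow> 'k::field^'n^'n"
  assumes dc: "decomp D C"
  shows "pset C Y \<longleftrightarrow> (\<forall>w. (mat 1 - cge D C w) ** Y ** cge D C w = 0)"
proof
  assume ps: "pset C Y"
  show "\<forall>w. (mat 1 - cge D C w) ** Y ** cge D C w = 0"
  proof
    fix w
    have "(mat 1 - cge D C w) ** Y ** cge D C w =
      (\<Sum>k\<in>{k. k \<le> D \<and> k < w}. \<Sum>l\<in>{w..D}. C k ** Y ** C l)"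
      apply (subst cge_split[OF dc])
      unfolding cge_def
      by (simp only: sum_mult_left, simp only: sum_mult_right)
    also have "\<dots> = 0" using ps unfolding pset_def by (intro sum.neutral ballI) auto
    finally show "(mat 1 - cge D C w) ** Y ** cge D C w = 0" .
  qed
next
  assume r: "\<forall>w. (mat 1 - cge D C w) ** Y ** cge D C w = 0"
  show "pset C Y" unfolding pset_def
  proof (intro allI impI)
    fix k l :: nat assume kl: "k < l"
    show "C k ** Y ** C l = 0"
    proof (cases "l \<le> D")
      case False thus ?thesis using decompD(1)[OF dc, of l] by simp
    next
      case True
      have "C k ** (mat 1 - cge D C l) = C k"
        using kl True by (simp add: matrix_diff_ldistrib cge_mult_C[OF dc])
      moreover have "cge D C l ** C l = C l" using True by (simp add: cge_mult_C[OF dc])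
      moreover have "C k ** ((mat 1 - cge D C l) ** Y ** cge D C l) ** C l =
         (C k ** (mat 1 - cge D C l)) ** Y ** (cge D C l ** C l)"
        by (simp only: matrix_mul_assoc)
      ultimately have "C k ** Y ** C l = C k ** ((mat 1 - cge D C l) ** Y ** cge D C l) ** C l"
        by simp
      thus ?thesis using r by simp
    qed
  qed
qed

lemma range_swap:
  fixes P Q Y :: "'k::field^'n^'n"
  assumes PQ: "P ** Q = Q" and QP: "Q ** P = P"
  shows "(mat 1 - P) ** Y ** P = 0 \<longleftrightarrow> (mat 1 - Q) ** Y ** Q = 0"
proof -
  have gen: "(mat 1 - B) ** Y ** B = 0" if "A ** B = B" "B ** A = A" "(mat 1 - A) ** Y ** A = 0"
    for A B :: "'k^'n^'n"
  proof -
    have "(mat 1 - B) ** (mat 1 - A) = mat 1 - B"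
      using that(2) by (simp add: matrix_diff_ldistrib matrix_diff_rdistrib)
    have "(mat 1 - B) ** ((mat 1 - A) ** Y ** A) ** B = ((mat 1 - B) ** (mat 1 - A)) ** Y ** (A ** B)"
      by (simp only: matrix_mul_assoc)
    hence "(mat 1 - B) ** Y ** B = (mat 1 - B) ** ((mat 1 - A) ** Y ** A) ** B"
      using that(1) \<open>(mat 1 - B) ** (mat 1 - A) = mat 1 - B\<close> by simp
    thus ?thesis using that(3) by simp
  qed
  show ?thesis using gen[OF PQ QP] gen[OF QP PQ] by blast
qed

lemma sum_if_E_prod:
  fixes E :: "nat \<Rightarrow> 'k::field^'n^'n"
  assumes de: "decomp D' E"
  shows "(\<Sum>m\<le>D'. if P m then E m else 0) ** (\<Sum>m\<le>D'. if Q m then E m else 0) =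
         (\<Sum>m\<le>D'. if P m \<and> Q m then E m else 0)"
proof -
  have "(\<Sum>m\<le>D'. if P m then E m else 0) ** (\<Sum>m\<le>D'. if Q m then E m else 0) =
      (\<Sum>m\<le>D'. \<Sum>m'\<le>D'. (if P m then E m else 0) ** (if Q m' then E m' else 0))"
    by (simp only: sum_mult_left, simp only: sum_mult_right)
  also have "\<dots> = (\<Sum>m\<le>D'. \<Sum>m'\<le>D'. if m = m' then (if P m \<and> Q m then E m else 0) else 0)"
    using decompD(2)[OF de] by (intro sum.cong refl) auto
  also have "\<dots> = (\<Sum>m\<le>D'. if P m \<and> Q m then E m else 0)"
    by (intro sum.cong refl) (simp add: sum.delta)
  finally show ?thesis .
qed

lemma sum_if_E_comm:
  assumes "\<forall>m. E m ** h = h ** (E m :: 'k::field^'n^'n)"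
  shows "(\<Sum>m\<le>D'. if P m then E m else 0) ** h = h ** (\<Sum>m\<le>D'. if P m then E m else 0)"
  unfolding sum_mult_left sum_mult_right using assms by (intro sum.cong refl) auto

lemma core:
  fixes C E :: "nat \<Rightarrow> 'k::field^'n^'n"
  assumes dc: "decomp D C" and de: "decomp D' E"
    and pseq: "\<forall>Y. pset C Y \<longleftrightarrow> pset E Y"
    and G: "G = (\<lambda>k. \<Sum>m\<le>D'. E m ** C k ** E m)"
  shows "decomp D G" "\<forall>Y. pset G Y \<longleftrightarrow> pset C Y"
    "\<forall>h. (\<forall>m. E m ** h = h ** E m) \<longrightarrow> (\<forall>k. G k ** h = h ** G k)"
    "\<forall>w. cge D C w ** cge D G w = cge D G w \<and> cge D G w ** cge D C w = cge D C w"
proof -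
  define inn where "inn w m \<longleftrightarrow> cge D C w ** E m = E m" for w m
  have dich: "\<not> inn w m \<Longrightarrow> E m ** cge D C w = 0" for w m
  proof -
    assume ni: "\<not> inn w m"
    let ?P = "cge D C w"
    have "(mat 1 - ?P) ** (E m ** X ** E m) ** ?P = 0" for X
    proof -
      have "pset E (E m ** X ** E m)" unfolding pset_def
      proof (intro allI impI)
        fix k l :: nat assume "k < l"
        have "E k ** (E m ** X ** E m) ** E l = (E k ** E m) ** X ** (E m ** E l)"
          by (simp add: matrix_mul_assoc)
        thus "E k ** (E m ** X ** E m) ** E l = 0"
          using decompD(2)[OF de] \<open>k < l\<close> by auto
      qed
      hence "pset C (E m ** X ** E m)" using pseq by blast
      thus ?thesis using pset_iff_cge[OF dc] by blast
    qed
    hence "\<forall>X. ((mat 1 - ?P) ** E m) ** X ** (E m ** ?P) = 0" by (simp add: matrix_mul_assoc)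
    hence "(mat 1 - ?P) ** E m = 0 \<or> E m ** ?P = 0" by (rule all_sandwich_zero)
    moreover have "(mat 1 - ?P) ** E m \<noteq> 0" using ni unfolding inn_def
      by (simp add: matrix_diff_rdistrib)
    ultimately show ?thesis by blast
  qed
  have EPE: "E m ** cge D C w ** E m = (if inn w m then E m else 0)" for w m
  proof (cases "inn w m")
    case True
    hence "E m ** cge D C w ** E m = E m ** E m" unfolding inn_def by (simp add: matrix_mul_assoc[symmetric])
    thus ?thesis using True decompD(2)[OF de, of m m] by simp
  next
    case False thus ?thesis using dich by simp
  qed
  have Gge: "cge D G w = (\<Sum>m\<le>D'. if inn w m then E m else 0)" for w
  proof -
    have "cge D G w = (\<Sum>m\<le>D'. \<Sum>k\<in>{w..D}. E m ** C k ** E m)"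
      unfolding cge_def G by (rule sum.swap)
    also have "\<dots> = (\<Sum>m\<le>D'. E m ** cge D C w ** E m)"
      unfolding cge_def by (simp only: sum_mult_left sum_mult_right)
    also have "\<dots> = (\<Sum>m\<le>D'. if inn w m then E m else 0)" using EPE by simp
    finally show ?thesis .
  qed
  have mono: "inn j m" if "j \<le> w" "inn w m" for j w m
  proof -
    have "cge D C j ** E m = cge D C j ** (cge D C w ** E m)" using that(2) unfolding inn_def by simp
    also have "\<dots> = (cge D C j ** cge D C w) ** E m" by (simp only: matrix_mul_assoc)
    also have "\<dots> = cge D C w ** E m" using cge_mult_cge[OF dc that(1)] by simp
    also have "\<dots> = E m" using that(2) unfolding inn_def by simp
    finally show ?thesis unfolding inn_def .
  qed
  have Gz: "G k = 0" if "D < k" for k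
    using decompD(1)[OF dc that] unfolding G by simp
  have Gk: "G k = (\<Sum>m\<le>D'. if inn k m \<and> \<not> inn (Suc k) m then E m else 0)" if kD: "k \<le> D" for k
  proof -
    have "G k = (\<Sum>m\<le>D'. E m ** cge D C k ** E m - E m ** cge D C (Suc k) ** E m)"
      unfolding G cge_Suc[OF kD, of C]
      by (intro sum.cong refl) (simp add: matrix_add_ldistrib matrix_add_rdistrib')
    also have "\<dots> = (\<Sum>m\<le>D'. if inn k m \<and> \<not> inn (Suc k) m then E m else 0)"
      unfolding EPE using mono[of k "Suc k"] by (intro sum.cong refl) auto
    finally show ?thesis .
  qed
  show dG: "decomp D G" unfolding decomp_def
  proof (intro conjI allI impI)
    show "\<And>k. D < k \<Longrightarrow> G k = 0" by (rule Gz)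
  next
    fix k l
    show "G k ** G l = (if k = l then G k else 0)"
    proof (cases "k \<le> D \<and> l \<le> D")
      case False thus ?thesis using Gz by (auto simp: not_le)
    next
      case True
      have "G k ** G l = (\<Sum>m\<le>D'. if (inn k m \<and> \<not> inn (Suc k) m) \<and> (inn l m \<and> \<not> inn (Suc l) m) then E m else 0)"
        using True Gk[of k] Gk[of l] sum_if_E_prod[OF de] by simp
      also have "\<dots> = (if k = l then G k else 0)"
      proof (cases "k = l")
        case True thus ?thesis using Gk \<open>k \<le> D \<and> l \<le> D\<close> by simp
      next
        case False
        have "\<not> ((inn k m \<and> \<not> inn (Suc k) m) \<and> (inn l m \<and> \<not> inn (Suc l) m))" for m
        proof (cases "k < l")
          case True thus ?thesis using mono[of "Suc k" l m] by auto
        next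
          case False thus ?thesis using mono[of "Suc l" k m] \<open>k \<noteq> l\<close> by auto
        qed
        hence "(\<Sum>m\<le>D'. if (inn k m \<and> \<not> inn (Suc k) m) \<and> (inn l m \<and> \<not> inn (Suc l) m) then E m else 0) = 0"
          by (intro sum.neutral) auto
        thus ?thesis using False by simp
      qed
      finally show ?thesis .
    qed
  next
    have "(\<Sum>k\<le>D. G k) = (\<Sum>m\<le>D'. E m ** (\<Sum>k\<le>D. C k) ** E m)"
      unfolding G by (subst sum.swap) (simp only: sum_mult_left sum_mult_right)
    also have "\<dots> = (\<Sum>m\<le>D'. E m)"
      using decompD(3)[OF dc] decompD(2)[OF de] by simp
    also have "\<dots> = mat 1" using decompD(3)[OF de] .
    finally show "(\<Sum>k\<le>D. G k) = mat 1" .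
  qed
  have rel: "cge D C w ** cge D G w = cge D G w \<and> cge D G w ** cge D C w = cge D C w" for w
  proof
    show "cge D C w ** cge D G w = cge D G w"
      unfolding Gge sum_mult_right using inn_def by (intro sum.cong refl) auto
    have "cge D G w ** cge D C w = (\<Sum>m\<le>D'. E m ** cge D C w)"
      unfolding Gge sum_mult_left using dich by (intro sum.cong refl) auto
    also have "\<dots> = cge D C w" using decompD(3)[OF de] by (simp add: sum_mult_left[symmetric])
    finally show "cge D G w ** cge D C w = cge D C w" .
  qed
  thus "\<forall>w. cge D C w ** cge D G w = cge D G w \<and> cge D G w ** cge D C w = cge D C w" by blast
  show "\<forall>Y. pset G Y \<longleftrightarrow> pset C Y"
  proof
    fix Y
    show "pset G Y \<longleftrightarrow> pset C Y"
      unfolding pset_iff_cge[OF dc] pset_iff_cge[OF dG]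
      using range_swap[of "cge D C w" "cge D G w" Y for w] rel by blast
  qed
  show "\<forall>h. (\<forall>m. E m ** h = h ** E m) \<longrightarrow> (\<forall>k. G k ** h = h ** G k)"
  proof (intro allI impI)
    fix h k assume c: "\<forall>m. E m ** h = h ** E m"
    show "G k ** h = h ** G k"
    proof (cases "k \<le> D")
      case True show ?thesis unfolding Gk[OF True]
        by (rule sum_if_E_comm[OF c, where P = "\<lambda>m. inn k m \<and> \<not> inn (Suc k) m"])
    next
      case False thus ?thesis using Gz by simp
    qed
  qed
qed


section \<open>Zariski closure and limits\<close>

lemma poly_fun_comp:
  fixes P :: "'n::finite \<Rightarrow> 'n \<Rightarrow> 'k::field poly"
  assumes "f \<in> poly_fun"
  shows "\<exists>q. \<forall>b. f (pm P b) = poly q b"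
  using assms
proof (induct rule: poly_fun.induct)
  case (const c) show ?case by (rule exI[of _ "[:c:]"]) simp
next
  case (coord i j) show ?case by (rule exI[of _ "P i j"]) simp
next
  case (add f g)
  then obtain q1 q2 where "\<forall>b. f (pm P b) = poly q1 b" "\<forall>b. g (pm P b) = poly q2 b" by blast
  thus ?case by (intro exI[of _ "q1 + q2"]) simp
next
  case (mult f g)
  then obtain q1 q2 where "\<forall>b. f (pm P b) = poly q1 b" "\<forall>b. g (pm P b) = poly q2 b" by blast
  thus ?case by (intro exI[of _ "q1 * q2"]) simp
qed

lemma closed_limit:
  fixes P :: "'n::finite \<Rightarrow> 'n \<Rightarrow> 'k::field poly"
  assumes inf: "infinite (UNIV :: 'k set)"
    and zc: "zariski_closed Cz" and h: "\<forall>b. b \<noteq> 0 \<longrightarrow> pm P b \<in> Cz"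
  shows "pm P 0 \<in> Cz"
proof -
  obtain F where F: "F \<subseteq> poly_fun" "Cz = {A. \<forall>f\<in>F. f A = 0}"
    using zc unfolding zariski_closed_def by blast
  have "f (pm P 0) = 0" if f: "f \<in> F" for f
  proof -
    obtain q where q: "\<forall>b. f (pm P b) = poly q b" using poly_fun_comp F(1) f by blast
    have "\<forall>b. b \<noteq> 0 \<longrightarrow> f (pm P b) = 0" using h F(2) f by blast
    hence "\<forall>b. b \<noteq> 0 \<longrightarrow> poly q b = 0" using q by simp
    hence "q = 0" by (rule poly_zero_nonzero[OF inf])
    thus ?thesis using q by simp
  qed
  thus ?thesis using F(2) by blast
qed

lemma limit_in_closed:
  fixes E :: "nat \<Rightarrow> 'k::field^'n^'n"
  assumes inf: "infinite (UNIV :: 'k set)"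
    and sg: "is_subgroup K" and zc: "zariski_closed Cz" and KC: "K = GL \<inter> Cz"
    and de: "decomp D' E" and mu: "\<forall>a. a \<noteq> 0 \<longrightarrow> mu a = lcurve N' D' E a"
    and muK: "\<forall>a. a \<noteq> 0 \<longrightarrow> mu a \<in> K"
    and X: "X \<in> K" and ps: "pset E X"
  shows "(\<Sum>m\<le>D'. E m ** X ** E m) \<in> Cz"
proof -
  have "has_limit mu X (\<Sum>m\<le>D'. E m ** X ** E m)"
    using has_limit_iff[OF inf de mu] ps by simp
  then obtain P where P: "\<forall>a. a \<noteq> 0 \<longrightarrow> (\<forall>i j. (mu a ** X ** matrix_inv (mu a)) $ i $ j = poly (P i j) a)"
    and L: "\<forall>i j. (\<Sum>m\<le>D'. E m ** X ** E m) $ i $ j = poly (P i j) 0"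
    unfolding has_limit_def by blast
  have "pm P b \<in> Cz" if b: "b \<noteq> 0" for b
  proof -
    have "pm P b = mu b ** X ** matrix_inv (mu b)" using P b by (simp add: vec_eq_iff)
    moreover have "mu b ** X ** matrix_inv (mu b) \<in> K"
      using sg muK b X unfolding is_subgroup_def by blast
    ultimately show ?thesis using KC by simp
  qed
  hence "pm P 0 \<in> Cz" using closed_limit[OF inf zc] by blast
  moreover have "pm P 0 = (\<Sum>m\<le>D'. E m ** X ** E m)" using L by (simp add: vec_eq_iff)
  ultimately show ?thesis by simp
qed

section \<open>Projections of a direct sum decomposition\<close>

lemma sum_mv: "(\<Sum>x\<in>S. (f x::'k::field^'n^'n)) *v v = (\<Sum>x\<in>S. f x *v v)"
  by (induct S rule: infinite_finite_induct) (auto simp: matrix_vector_mult_add_rdistrib)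

lemma mv_sum: "(A::'k::field^'n^'n) *v (\<Sum>x\<in>S. f x) = (\<Sum>x\<in>S. A *v f x)"
  by (induct S rule: infinite_finite_induct) (auto simp: matrix_vector_right_distrib)

definition cs :: "nat \<Rightarrow> (nat \<Rightarrow> ('k::field^'n) set) \<Rightarrow> 'k^'n \<Rightarrow> nat \<Rightarrow> 'k^'n" where
  "cs n W v = (SOME vs. (\<forall>i<n. vs i \<in> W i) \<and> v = (\<Sum>i<n. vs i))"

definition pr :: "nat \<Rightarrow> (nat \<Rightarrow> ('k::field^'n) set) \<Rightarrow> nat \<Rightarrow> 'k^'n^'n" where
  "pr n W j = (\<chi> r s. cs n W (axis s 1) j $ r)"

context
  fixes n :: nat and W :: "nat \<Rightarrow> ('k::field^'n::finite) set"
  assumes dsd: "direct_sum_decomp n W"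
begin

lemma dsd1: "\<forall>i<n. is_subspace (W i)"
  using dsd unfolding direct_sum_decomp_def by (rule conjunct1)

lemma dsd2: "\<forall>v. \<exists>vs. (\<forall>i<n. vs i \<in> W i) \<and> v = (\<Sum>i<n. vs i)"
  using dsd unfolding direct_sum_decomp_def by (rule conjunct1[OF conjunct2])

lemma dsd3: "\<forall>vs. (\<forall>i<n. vs i \<in> W i) \<and> (\<Sum>i<n. vs i) = 0 \<longrightarrow> (\<forall>i<n. vs i = 0)"
  using dsd unfolding direct_sum_decomp_def by (rule conjunct2[OF conjunct2])

lemma subsp: "i < n \<Longrightarrow> is_subspace (W i)"
  using dsd1 by simp

lemma subsp_diff: "i < n \<Longrightarrow> v \<in> W i \<Longrightarrow> w \<in> W i \<Longrightarrow> v - w \<in> W i"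
proof -
  assume i: "i < n" and v: "v \<in> W i" and w: "w \<in> W i"
  have "(-1) *s w \<in> W i" using subsp[OF i] w unfolding is_subspace_def by blast
  hence "v + (-1) *s w \<in> W i" using subsp[OF i] v unfolding is_subspace_def by blast
  moreover have "v + (-1) *s w = v - w" by (simp add: vec_eq_iff)
  ultimately show ?thesis by simp
qed

lemma subsp_sum: "i < n \<Longrightarrow> (\<forall>x\<in>S. f x \<in> W i) \<Longrightarrow> (\<Sum>x\<in>S. f x) \<in> W i"
proof (induct S rule: infinite_finite_induct)
  case (infinite S) thus ?case using subsp unfolding is_subspace_def by simp
next
  case empty thus ?case using subsp unfolding is_subspace_def by simp
next
  case (insert x F) thus ?case using subsp[OF insert(4)] unfolding is_subspace_def by simp
qed

lemma cs_spec: "(\<forall>i<n. cs n W v i \<in> W i) \<and> v = (\<Sum>i<n. cs n W v i)"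
proof -
  have "\<exists>vs. (\<forall>i<n. vs i \<in> W i) \<and> v = (\<Sum>i<n. vs i)" using dsd2 by (rule spec)
  thus ?thesis unfolding cs_def by (rule someI_ex)
qed

lemma decomp_unique:
  assumes "\<forall>i<n. vs i \<in> W i" "\<forall>i<n. ws i \<in> W i" "(\<Sum>i<n. vs i) = (\<Sum>i<n. ws i)" "i < n"
  shows "vs i = ws i"
proof -
  have a1: "\<forall>i<n. vs i - ws i \<in> W i"
  proof (intro allI impI)
    fix i assume i: "i < n"
    show "vs i - ws i \<in> W i" using subsp_diff[OF i] assms(1,2) i by blast
  qed
  have a2: "(\<Sum>i<n. vs i - ws i) = 0"
  proof -
    have "(\<Sum>i<n. vs i - ws i) = (\<Sum>i<n. vs i) - (\<Sum>i<n. ws i)" by (rule sum_subtractf)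
    also have "\<dots> = 0" unfolding assms(3) by (rule diff_self)
    finally show ?thesis .
  qed
  have h: "(\<forall>i<n. vs i - ws i \<in> W i) \<and> (\<Sum>i<n. vs i - ws i) = 0 \<longrightarrow> (\<forall>i<n. vs i - ws i = 0)"
    by (rule spec[OF dsd3])
  have "\<forall>i<n. vs i - ws i = 0" by (rule mp[OF h conjI[OF a1 a2]])
  thus ?thesis using assms(4) by simp
qed

lemma cs_eq: "\<forall>i<n. vs i \<in> W i \<Longrightarrow> v = (\<Sum>i<n. vs i) \<Longrightarrow> i < n \<Longrightarrow> cs n W v i = vs i"
  using decomp_unique[of "cs n W v" vs i] cs_spec[of v] by auto

lemma scal_sum_vec: "c *s (\<Sum>i\<in>S. f i) = (\<Sum>i\<in>S. c *s (f i :: 'k^'n))"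
  by (simp add: vec_eq_iff sum_component sum_distrib_left)

lemma cs_in_W: "j < n \<Longrightarrow> v \<in> W j \<Longrightarrow> cs n W v l = (if l = j then v else 0)" if "l < n"
proof -
  assume j: "j < n" and v: "v \<in> W j"
  have "\<forall>i<n. (if i = j then v else 0) \<in> W i" using v subsp unfolding is_subspace_def by auto
  moreover have "v = (\<Sum>i<n. if i = j then v else 0)" using j by (simp add: sum.delta)
  ultimately show ?thesis using cs_eq[of "\<lambda>i. if i = j then v else 0" v l] that by simp
qed

lemma pr_mult: "j < n \<Longrightarrow> pr n W j *v v = cs n W v j"
proof -
  assume j: "j < n"
  define vs where "vs i = (\<Sum>s\<in>UNIV. (v $ s) *s cs n W (axis s 1) i)" for i
  have "\<forall>i<n. vs i \<in> W i"
    unfolding vs_def using cs_spec subsp unfolding is_subspace_def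
    by (auto intro!: subsp_sum)
  moreover have "v = (\<Sum>i<n. vs i)"
  proof -
    have "(\<Sum>i<n. vs i) = (\<Sum>s\<in>UNIV. (v $ s) *s (\<Sum>i<n. cs n W (axis s 1) i))"
      unfolding vs_def scal_sum_vec by (rule sum.swap)
    also have "\<dots> = (\<Sum>s\<in>UNIV. (v $ s) *s axis s 1)" using cs_spec by metis
    also have "\<dots> = v" by (rule basis_expansion)
    finally show ?thesis by simp
  qed
  ultimately have "cs n W v j = vs j" using cs_eq j by blast
  thus ?thesis unfolding vs_def pr_def
    by (simp add: vec_eq_iff matrix_vector_mult_def sum_component mult.commute)
qed

lemma pr_in: "j < n \<Longrightarrow> pr n W j *v v \<in> W j"
  using pr_mult cs_spec by simp

lemma pr_on: "j < n \<Longrightarrow> l < n \<Longrightarrow> v \<in> W l \<Longrightarrow> pr n W j *v v = (if j = l then v else 0)"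
  using pr_mult cs_in_W by simp

lemma pr_orth: "j < n \<Longrightarrow> l < n \<Longrightarrow> pr n W j ** pr n W l = (if j = l then pr n W j else 0)"
  unfolding matrix_eq
  using pr_on pr_in by (auto simp: matrix_vector_mul_assoc[symmetric])

lemma pr_sum: "(\<Sum>j<n. pr n W j) = mat 1"
proof -
  have "(\<Sum>j<n. pr n W j) *v v = v" for v
  proof -
    have "(\<Sum>j<n. pr n W j) *v v = (\<Sum>j<n. pr n W j *v v)"
      by (rule sum_mv)
    also have "\<dots> = (\<Sum>j<n. cs n W v j)" using pr_mult by simp
    also have "\<dots> = v" using cs_spec by simp
    finally show ?thesis .
  qed
  thus ?thesis unfolding matrix_eq by simp
qed

lemma expand_pr: "(X::'k^'n^'n) = (\<Sum>j<n. X ** pr n W j)"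
proof -
  have "X = X ** (\<Sum>j<n. pr n W j)" using pr_sum by simp
  thus ?thesis by (simp only: sum_mult_right)
qed

lemma preserves_iff: "preserves n W g \<longleftrightarrow> (\<forall>j<n. g ** pr n W j = pr n W j ** g)"
proof
  assume p: "preserves n W g"
  show "\<forall>j<n. g ** pr n W j = pr n W j ** g"
  proof (intro allI impI)
    fix j assume j: "j < n"
    have "(g ** pr n W j) *v v = (pr n W j ** g) *v v" for v
    proof -
      have gp: "g *v (pr n W l *v v) \<in> W l" if "l < n" for l
        using p pr_in that unfolding preserves_def by blast
      have vv: "v = (\<Sum>l<n. pr n W l *v v)" using pr_mult cs_spec by simp
      have "(pr n W j ** g) *v v = pr n W j *v (g *v (\<Sum>l<n. pr n W l *v v))"
        using vv by (simp add: matrix_vector_mul_assoc[symmetric])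
      also have "\<dots> = (\<Sum>l<n. pr n W j *v (g *v (pr n W l *v v)))"
        by (simp add: mv_sum)
      also have "\<dots> = (\<Sum>l<n. if j = l then g *v (pr n W l *v v) else 0)"
        using pr_on[OF j] gp by (intro sum.cong refl) auto
      also have "\<dots> = g *v (pr n W j *v v)" using j by (simp add: sum.delta)
      also have "\<dots> = (g ** pr n W j) *v v" by (simp add: matrix_vector_mul_assoc)
      finally show ?thesis by simp
    qed
    thus "g ** pr n W j = pr n W j ** g" unfolding matrix_eq by blast
  qed
next
  assume r: "\<forall>j<n. g ** pr n W j = pr n W j ** g"
  show "preserves n W g" unfolding preserves_def
  proof (intro allI impI ballI)
    fix j v assume j: "j < n" and v: "v \<in> W j"
    have "g *v v = g *v (pr n W j *v v)" using pr_on[OF j j v] by simp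
    also have "\<dots> = pr n W j *v (g *v v)" using r j by (simp add: matrix_vector_mul_assoc)
    finally show "g *v v \<in> W j" using pr_in[OF j, of "g *v v"] by simp
  qed
qed

end


lemma coeff_commute:
  fixes C :: "nat \<Rightarrow> 'k::field^'n^'n"
  assumes inf: "infinite (UNIV :: 'k set)" and dc: "decomp D C"
    and lam: "\<forall>a. a \<noteq> 0 \<longrightarrow> lam a = lcurve N D C a"
    and cm: "\<forall>a. a \<noteq> 0 \<longrightarrow> lam a ** Z = Z ** lam a"
  shows "C k ** Z = Z ** C k"
proof (cases "k \<le> D")
  case False thus ?thesis using decompD(1)[OF dc, of k] by simp
next
  case True
  define M where "M k = C k ** Z - Z ** C k" for k
  have "M k $ i $ j = 0" for i j
  proof -
    have "\<forall>a. a \<noteq> 0 \<longrightarrow> (\<Sum>k\<le>D. M k $ i $ j * a ^ k) = 0"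
    proof (intro allI impI)
      fix a :: 'k assume a: "a \<noteq> 0"
      have "lcurve N D C a ** Z - Z ** lcurve N D C a = 0" using cm lam a by simp
      hence "(\<Sum>k\<le>D. sm (a ^ k / a ^ N) (M k)) = 0"
        unfolding lcurve_def M_def sum_mult_left sum_mult_right
        by (simp add: sm_diff sum_subtractf)
      hence "sm (a ^ N) (\<Sum>k\<le>D. sm (a ^ k / a ^ N) (M k)) = 0" by simp
      hence "(\<Sum>k\<le>D. sm (a ^ k) (M k)) = 0" using a by (simp add: sm_sum)
      hence "(\<Sum>k\<le>D. sm (a ^ k) (M k)) $ i $ j = 0" by simp
      thus "(\<Sum>k\<le>D. M k $ i $ j * a ^ k) = 0" unfolding sum_nth2 by (simp add: mult.commute)
    qed
    from sum_monom_zero[OF inf this True] show ?thesis .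
  qed
  hence "M k = 0" by (simp add: vec_eq_iff)
  thus ?thesis unfolding M_def by simp
qed

context
  fixes n :: nat and W :: "nat \<Rightarrow> ('k::field^'n::finite) set"
  assumes dsd: "direct_sum_decomp n W"
begin

lemma ident_iff: "j < n \<Longrightarrow> (\<forall>v\<in>W j. g *v v = v) \<longleftrightarrow> g ** pr n W j = pr n W j"
proof
  assume j: "j < n" and h: "\<forall>v\<in>W j. g *v v = v"
  have "(g ** pr n W j) *v v = pr n W j *v v" for v
    using h pr_in[OF dsd j, of v] by (simp add: matrix_vector_mul_assoc[symmetric])
  thus "g ** pr n W j = pr n W j" unfolding matrix_eq by blast
next
  assume j: "j < n" and h: "g ** pr n W j = pr n W j"
  show "\<forall>v\<in>W j. g *v v = v"
  proof
    fix v assume v: "v \<in> W j"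
    have "g *v v = g *v (pr n W j *v v)" using pr_on[OF dsd j j v] by simp
    also have "\<dots> = pr n W j *v v" using h by (simp add: matrix_vector_mul_assoc)
    also have "\<dots> = v" using pr_on[OF dsd j j v] by simp
    finally show "g *v v = v" .
  qed
qed

lemma aoo_iff: "acts_only_on n W i g \<longleftrightarrow>
   (\<forall>j<n. g ** pr n W j = pr n W j ** g) \<and> (\<forall>j<n. j \<noteq> i \<longrightarrow> g ** pr n W j = pr n W j)"
  unfolding acts_only_on_def preserves_iff[OF dsd] using ident_iff by auto

lemma prod_mats_gen:
  assumes ks: "\<forall>j<n. acts_only_on n W j (ks j)" and m: "m \<le> n"
  shows "foldl (\<lambda>A i. A ** ks i) (mat 1) [0..<m] = (\<Sum>j<m. ks j ** pr n W j) + (\<Sum>j\<in>{m..<n}. pr n W j)"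
  using m
proof (induct m)
  case 0
  have "{0..<n} = {..<n}" by auto
  thus ?case using pr_sum[OF dsd] by simp
next
  case (Suc m)
  have mn: "m < n" using Suc by simp
  have IH: "foldl (\<lambda>A i. A ** ks i) (mat 1) [0..<m] = (\<Sum>j<m. ks j ** pr n W j) + (\<Sum>j\<in>{m..<n}. pr n W j)"
    using Suc by simp
  have km: "ks m ** pr n W j = pr n W j ** ks m" "j \<noteq> m \<Longrightarrow> ks m ** pr n W j = pr n W j" if "j < n" for j
    using ks mn that unfolding aoo_iff by auto
  have A: "(\<Sum>j<m. ks j ** pr n W j) ** ks m = (\<Sum>j<m. ks j ** pr n W j)"
    unfolding sum_mult_left
  proof (intro sum.cong refl)
    fix j assume "j \<in> {..<m}"
    hence j: "j < n" "j \<noteq> m" using mn by auto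
    have "ks j ** pr n W j ** ks m = ks j ** (ks m ** pr n W j)"
      using km(1)[OF j(1)] by (simp add: matrix_mul_assoc[symmetric])
    thus "ks j ** pr n W j ** ks m = ks j ** pr n W j" using km(2)[OF j] by simp
  qed
  have B: "(\<Sum>j\<in>{m..<n}. pr n W j) ** ks m = ks m ** pr n W m + (\<Sum>j\<in>{Suc m..<n}. pr n W j)"
  proof -
    have "{m..<n} = insert m {Suc m..<n}" using mn by auto
    hence "(\<Sum>j\<in>{m..<n}. pr n W j) ** ks m = pr n W m ** ks m + (\<Sum>j\<in>{Suc m..<n}. pr n W j ** ks m)"
      by (simp add: sum_mult_left matrix_add_rdistrib')
    also have "(\<Sum>j\<in>{Suc m..<n}. pr n W j ** ks m) = (\<Sum>j\<in>{Suc m..<n}. pr n W j)"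
      using km by (intro sum.cong refl) (metis atLeastLessThan_iff not_less_eq_eq order_refl)
    finally show ?thesis using km(1)[OF mn] by simp
  qed
  show ?case using IH A B by (simp add: matrix_add_rdistrib' add.assoc)
qed

lemma prod_mats_eq:
  assumes ks: "\<forall>j<n. acts_only_on n W j (ks j)"
  shows "prod_mats n ks = (\<Sum>j<n. ks j ** pr n W j)"
  using prod_mats_gen[OF ks order_refl] unfolding prod_mats_def by simp

lemma prod_mats_pr:
  assumes ks: "\<forall>j<n. acts_only_on n W j (ks j)" and i: "i < n"
  shows "prod_mats n ks ** pr n W i = ks i ** pr n W i"
proof -
  have "prod_mats n ks ** pr n W i = (\<Sum>j<n. ks j ** (pr n W j ** pr n W i))"
    unfolding prod_mats_eq[OF ks] sum_mult_left by (simp add: matrix_mul_assoc)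
  also have "\<dots> = (\<Sum>j<n. if j = i then ks i ** pr n W i else 0)"
    using pr_orth[OF dsd _ i] by (intro sum.cong refl) auto
  also have "\<dots> = ks i ** pr n W i" using i by (simp add: sum.delta')
  finally show ?thesis .
qed

lemma eq_by_pr:
  assumes "\<forall>j<n. (A::'k^'n^'n) ** pr n W j = B ** pr n W j"
  shows "A = B"
  using expand_pr[OF dsd, of A] expand_pr[OF dsd, of B] assms by (metis (no_types, lifting) lessThan_iff sum.cong)

lemma factor_eq:
  assumes ks: "\<forall>j<n. acts_only_on n W j (ks j)" and i: "i < n"
    and g: "acts_only_on n W i (prod_mats n ks)"
  shows "prod_mats n ks = ks i"
proof (rule eq_by_pr, intro allI impI)
  fix j assume j: "j < n"
  show "prod_mats n ks ** pr n W j = ks i ** pr n W j"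
  proof (cases "j = i")
    case True thus ?thesis using prod_mats_pr[OF ks i] by simp
  next
    case False
    have "prod_mats n ks ** pr n W j = pr n W j" using g j False unfolding aoo_iff by blast
    moreover have "ks i ** pr n W j = pr n W j" using ks i j False unfolding aoo_iff by blast
    ultimately show ?thesis by simp
  qed
qed

lemma one_aoo: "acts_only_on n W j (mat 1)"
  unfolding aoo_iff by simp

lemma single_prod:
  assumes g: "acts_only_on n W i g" and i: "i < n"
  shows "prod_mats n (\<lambda>j. if j = i then g else mat 1) = g"
proof -
  have ks: "\<forall>j<n. acts_only_on n W j (if j = i then g else mat 1)" using g one_aoo by auto
  show ?thesis
  proof (rule eq_by_pr, intro allI impI)
    fix j assume j: "j < n"
    have "prod_mats n (\<lambda>j. if j = i then g else mat 1) ** pr n W j = (if j = i then g else mat 1) ** pr n W j"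
      using prod_mats_pr[OF ks j] by simp
    also have "\<dots> = g ** pr n W j" using g j unfolding aoo_iff by auto
    finally show "prod_mats n (\<lambda>j. if j = i then g else mat 1) ** pr n W j = g ** pr n W j" .
  qed
qed

lemma factor_formula:
  assumes ks: "\<forall>j<n. acts_only_on n W j (ks j)" and i: "i < n"
  shows "ks i = prod_mats n ks ** pr n W i + (mat 1 - pr n W i)"
proof (rule eq_by_pr, intro allI impI)
  fix j assume j: "j < n"
  have pp: "pr n W i ** pr n W j = (if i = j then pr n W i else 0)" using pr_orth[OF dsd i j] .
  show "ks i ** pr n W j = (prod_mats n ks ** pr n W i + (mat 1 - pr n W i)) ** pr n W j"
  proof (cases "j = i")
    case True
    thus ?thesis using prod_mats_pr[OF ks i] pp
      by (simp add: matrix_add_rdistrib' matrix_diff_rdistrib matrix_mul_assoc[symmetric])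
  next
    case False
    have "ks i ** pr n W j = pr n W j" using ks i j False unfolding aoo_iff by blast
    thus ?thesis using False pp
      by (simp add: matrix_add_rdistrib' matrix_diff_rdistrib matrix_mul_assoc[symmetric])
  qed
qed

end


lemma cochar_mono: "cocharacter M lam \<Longrightarrow> M \<subseteq> M' \<Longrightarrow> cocharacter M' lam"
  unfolding cocharacter_def by blast

lemma pset_lcurve:
  fixes C :: "nat \<Rightarrow> 'k::field^'n^'n"
  assumes dc: "decomp D C"
  shows "pset C (lcurve N D C a)"
  unfolding pset_def
proof (intro allI impI)
  fix p q :: nat assume pq: "p < q"
  have "C p ** lcurve N D C a ** C q = (\<Sum>k\<le>D. sm (a ^ k / a ^ N) (C p ** C k ** C q))"
    unfolding lcurve_def by (simp add: sum_mult_left sum_mult_right matrix_mul_assoc)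
  also have "\<dots> = 0"
    using pq decompD(2)[OF dc] by (intro sum.neutral) auto
  finally show "C p ** lcurve N D C a ** C q = 0" .
qed

lemma lcurve_sandwich_sum:
  fixes C E :: "nat \<Rightarrow> 'k::field^'n^'n"
  shows "lcurve N D (\<lambda>k. \<Sum>m\<le>D'. E m ** C k ** E m) a = (\<Sum>m\<le>D'. E m ** lcurve N D C a ** E m)"
  unfolding lcurve_def
  by (simp add: sm_sum sum_mult_left sum_mult_right) (rule sum.swap)

lemma construct:
  fixes C E :: "nat \<Rightarrow> 'k::field^'n^'n"
  assumes inf: "infinite (UNIV :: 'k set)"
    and sg: "is_subgroup K" and zc: "zariski_closed Cz" and KC: "K = GL \<inter> Cz"
    and dc: "decomp D C" and lam: "\<forall>a. a \<noteq> 0 \<longrightarrow> lam a = lcurve N D C a"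
    and lamK: "\<forall>a. a \<noteq> 0 \<longrightarrow> lam a \<in> K"
    and de: "decomp D' E" and mu: "\<forall>a. a \<noteq> 0 \<longrightarrow> mu a = lcurve N' D' E a"
    and muK: "\<forall>a. a \<noteq> 0 \<longrightarrow> mu a \<in> K"
    and PP: "P_of lam = P_of mu"
    and G: "G = (\<lambda>k. \<Sum>m\<le>D'. E m ** C k ** E m)"
  shows "decomp D G" "\<forall>Y. pset G Y \<longleftrightarrow> pset C Y"
    "\<forall>h. (\<forall>m. E m ** h = h ** E m) \<longrightarrow> (\<forall>k. G k ** h = h ** G k)"
    "\<forall>w. cge D C w ** cge D G w = cge D G w \<and> cge D G w ** cge D C w = cge D C w"
    "\<forall>a. a \<noteq> 0 \<longrightarrow> lcurve N D G a \<in> K"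
    "\<forall>a. lcurve N D G a = (\<Sum>m\<le>D'. E m ** lcurve N D C a ** E m)"
proof -
  have gl: "\<forall>g. g \<in> GL \<longrightarrow> (pset C g \<longleftrightarrow> pset E g)"
    using PP P_of_iff[OF inf dc lam] P_of_iff[OF inf de mu] by blast
  have pseq: "\<forall>Y. pset C Y \<longleftrightarrow> pset E Y"
    using pset_from_P1[OF inf dc de] pset_from_P1[OF inf de dc] gl by blast
  note co = core[OF dc de pseq G]
  show "decomp D G" "\<forall>Y. pset G Y \<longleftrightarrow> pset C Y"
    "\<forall>h. (\<forall>m. E m ** h = h ** E m) \<longrightarrow> (\<forall>k. G k ** h = h ** G k)"
    "\<forall>w. cge D C w ** cge D G w = cge D G w \<and> cge D G w ** cge D C w = cge D C w"
    using co by blast+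
  show sw: "\<forall>a. lcurve N D G a = (\<Sum>m\<le>D'. E m ** lcurve N D C a ** E m)"
    unfolding G by (simp add: lcurve_sandwich_sum)
  show "\<forall>a. a \<noteq> 0 \<longrightarrow> lcurve N D G a \<in> K"
  proof (intro allI impI)
    fix a :: 'k assume a: "a \<noteq> 0"
    have X: "lcurve N D C a \<in> K" using lamK lam a by metis
    have "pset E (lcurve N D C a)" using pseq pset_lcurve[OF dc] by blast
    hence "(\<Sum>m\<le>D'. E m ** lcurve N D C a ** E m) \<in> Cz"
      using limit_in_closed[OF inf sg zc KC de mu muK X] by blast
    hence "lcurve N D G a \<in> Cz" using sw by simp
    moreover have "lcurve N D G a \<in> GL" using lcurve_inv(2)[OF co(1) a] unfolding GL_def by simp
    ultimately show "lcurve N D G a \<in> K" using KC by simp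
  qed
qed


lemma comm_sum: "(\<forall>x\<in>S. f x ** Z = Z ** (f x :: 'k::field^'n^'n)) \<Longrightarrow> (\<Sum>x\<in>S. f x) ** Z = Z ** (\<Sum>x\<in>S. f x)"
  unfolding sum_mult_left sum_mult_right by (intro sum.cong) auto

lemma lcurve_comm: "(\<forall>k. C k ** Z = Z ** (C k :: 'k::field^'n^'n)) \<Longrightarrow> lcurve N D C a ** Z = Z ** lcurve N D C a"
  unfolding lcurve_def by (rule comm_sum) simp

lemma pset_blockext:
  fixes C :: "nat \<Rightarrow> 'k::field^'n^'n"
  assumes QQ: "Q ** Q = Q" and hQ: "h ** Q = Q ** h" and CQ: "\<forall>k. C k ** Q = Q ** C k"
    and ps: "pset C h"
  shows "pset (\<lambda>k. C k ** Q + (if k = N then mat 1 - Q else 0)) h"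
  unfolding pset_def
proof (intro allI impI)
  fix k l :: nat assume kl: "k < l"
  have r1: "Q ** h = h ** Q" "Q ** (h ** Z) = h ** (Q ** Z)" for Z
    using hQ by (simp_all add: matrix_mul_assoc)
  have r2: "Q ** C j = C j ** Q" "Q ** (C j ** Z) = C j ** (Q ** Z)" for j Z
    using CQ by (simp_all add: matrix_mul_assoc)
  have r3: "Q ** (Q ** Z) = Q ** Z" for Z using QQ by (simp add: matrix_mul_assoc)
  have chc: "C k ** (h ** C l) = 0" using ps kl unfolding pset_def by (simp add: matrix_mul_assoc)
  have chc': "C k ** (h ** (C l ** Z)) = 0" for Z using chc by (simp add: matrix_mul_assoc)
  show "(C k ** Q + (if k = N then mat 1 - Q else 0)) ** h ** (C l ** Q + (if l = N then mat 1 - Q else 0)) = 0"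
    using kl
    by (simp add: matrix_add_ldistrib matrix_add_rdistrib' matrix_diff_ldistrib matrix_diff_rdistrib
        matrix_mul_assoc[symmetric] r1 r2 r3 QQ chc chc')
qed

lemma comm3:
  fixes A B C Z :: "'k::field^'n^'n"
  assumes "A ** Z = Z ** A" "B ** Z = Z ** B" "C ** Z = Z ** C"
  shows "A ** B ** C ** Z = Z ** (A ** B ** C)"
proof -
  have "A ** B ** C ** Z = A ** B ** (C ** Z)" by (simp only: matrix_mul_assoc)
  also have "\<dots> = A ** (B ** Z) ** C" using assms(3) by (simp only: matrix_mul_assoc)
  also have "\<dots> = (A ** Z) ** B ** C" using assms(2) by (simp only: matrix_mul_assoc)
  also have "\<dots> = Z ** (A ** B ** C)" using assms(1) by (simp only: matrix_mul_assoc)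
  finally show ?thesis .
qed

lemma mid_move:
  fixes A B Z :: "'k::field^'n^'n"
  assumes "A ** Z = Z ** A"
  shows "A ** B ** A ** Z = A ** (B ** Z) ** A"
proof -
  have "A ** B ** A ** Z = A ** B ** (A ** Z)" by (simp only: matrix_mul_assoc)
  also have "\<dots> = A ** (B ** Z) ** A" using assms by (simp only: matrix_mul_assoc)
  finally show ?thesis .
qed

context
  fixes n :: nat and W :: "nat \<Rightarrow> ('k::field^'n::finite) set"
    and K :: "('k^'n^'n) set" and Ks :: "nat \<Rightarrow> ('k^'n^'n) set" and Cz :: "('k^'n^'n) set"
  assumes inf: "infinite (UNIV :: 'k set)"
    and dsd: "direct_sum_decomp n W"
    and sgK: "is_subgroup K" and zc: "zariski_closed Cz" and KC: "K = GL \<inter> Cz"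
    and Kpres: "\<forall>g\<in>K. preserves n W g"
    and Ks: "\<forall>i<n. is_subgroup (Ks i) \<and> (\<forall>g\<in>Ks i. acts_only_on n W i g)"
    and Kdef: "K = {prod_mats n ks | ks. \<forall>i<n. ks i \<in> Ks i}"
begin

lemma Ks_aoo: "i < n \<Longrightarrow> g \<in> Ks i \<Longrightarrow> acts_only_on n W i g"
  using Ks by blast

lemma Ks_sub: "i < n \<Longrightarrow> is_subgroup (Ks i)"
  using Ks by blast

lemma Ks_in_K: "i < n \<Longrightarrow> g \<in> Ks i \<Longrightarrow> g \<in> K"
proof -
  assume i: "i < n" and g: "g \<in> Ks i"
  have "\<forall>j<n. (if j = i then g else mat 1) \<in> Ks j"
    using g Ks_sub unfolding is_subgroup_def by auto
  moreover have "g = prod_mats n (\<lambda>j. if j = i then g else mat 1)"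
    using single_prod[OF dsd Ks_aoo[OF i g] i] by simp
  ultimately have "\<exists>ks. g = prod_mats n ks \<and> (\<forall>j<n. ks j \<in> Ks j)" by (intro exI conjI)
  thus "g \<in> K" unfolding Kdef by (simp only: mem_Collect_eq)
qed

lemma K_comm: "g \<in> K \<Longrightarrow> j < n \<Longrightarrow> g ** pr n W j = pr n W j ** g"
  using Kpres preserves_iff[OF dsd] by blast

lemma in_Ks: "g \<in> K \<Longrightarrow> acts_only_on n W i g \<Longrightarrow> i < n \<Longrightarrow> g \<in> Ks i"
proof -
  assume g: "g \<in> K" and a: "acts_only_on n W i g" and i: "i < n"
  obtain ks where ks: "g = prod_mats n ks" "\<forall>j<n. ks j \<in> Ks j" using g unfolding Kdef by blast
  have ka: "\<forall>j<n. acts_only_on n W j (ks j)" using ks(2) Ks_aoo by blast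
  have "g = ks i" using factor_eq[OF dsd ka i] a ks(1) by simp
  thus ?thesis using ks(2) i by simp
qed

lemma K_factor: "g \<in> K \<Longrightarrow> i < n \<Longrightarrow> g ** pr n W i + (mat 1 - pr n W i) \<in> Ks i"
proof -
  assume g: "g \<in> K" and i: "i < n"
  obtain ks where ks: "g = prod_mats n ks" "\<forall>j<n. ks j \<in> Ks j" using g unfolding Kdef by blast
  have ka: "\<forall>j<n. acts_only_on n W j (ks j)" using ks(2) Ks_aoo by blast
  have "ks i = g ** pr n W i + (mat 1 - pr n W i)" using factor_formula[OF dsd ka i] ks(1) by simp
  thus ?thesis using ks(2) i by metis
qed

lemma K_GL: "K \<subseteq> GL" using sgK unfolding is_subgroup_def by blast

lemma Ks_GL: "i < n \<Longrightarrow> Ks i \<subseteq> GL" using Ks_sub unfolding is_subgroup_def by blast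

lemma construct_Ks:
  fixes C E :: "nat \<Rightarrow> 'k^'n^'n"
  assumes i: "i < n"
    and dc: "decomp D C" and lam: "\<forall>a. a \<noteq> 0 \<longrightarrow> lam a = lcurve N D C a"
    and lamK: "\<forall>a. a \<noteq> 0 \<longrightarrow> lam a \<in> Ks i"
    and de: "decomp D' E" and mu: "\<forall>a. a \<noteq> 0 \<longrightarrow> mu a = lcurve N' D' E a"
    and muK: "\<forall>a. a \<noteq> 0 \<longrightarrow> mu a \<in> K"
    and PP: "P_of lam = P_of mu"
    and G: "G = (\<lambda>k. \<Sum>m\<le>D'. E m ** C k ** E m)"
  shows "decomp D G" "\<forall>Y. pset G Y \<longleftrightarrow> pset C Y"
    "\<forall>h. (\<forall>m. E m ** h = h ** E m) \<longrightarrow> (\<forall>k. G k ** h = h ** G k)"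
    "\<forall>w. cge D C w ** cge D G w = cge D G w \<and> cge D G w ** cge D C w = cge D C w"
    "\<forall>a. a \<noteq> 0 \<longrightarrow> lcurve N D G a \<in> Ks i"
    "\<forall>k j. j < n \<longrightarrow> G k ** pr n W j = pr n W j ** G k"
    "\<forall>k j. j < n \<longrightarrow> E k ** pr n W j = pr n W j ** E k"
proof -
  have lamK': "\<forall>a. a \<noteq> 0 \<longrightarrow> lam a \<in> K" using lamK Ks_in_K[OF i] by blast
  note co = construct[OF inf sgK zc KC dc lam lamK' de mu muK PP G]
  show "decomp D G" "\<forall>Y. pset G Y \<longleftrightarrow> pset C Y"
    "\<forall>h. (\<forall>m. E m ** h = h ** E m) \<longrightarrow> (\<forall>k. G k ** h = h ** G k)"
    "\<forall>w. cge D C w ** cge D G w = cge D G w \<and> cge D G w ** cge D C w = cge D C w"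
    using co by blast+
  have Ec: "E k ** pr n W j = pr n W j ** E k" if j: "j < n" for k j
  proof (rule coeff_commute[OF inf de mu])
    show "\<forall>a. a \<noteq> 0 \<longrightarrow> mu a ** pr n W j = pr n W j ** mu a"
      using muK K_comm j by blast
  qed
  thus "\<forall>k j. j < n \<longrightarrow> E k ** pr n W j = pr n W j ** E k" by blast
  have lamc: "lam a ** pr n W j = pr n W j ** lam a" "j \<noteq> i \<Longrightarrow> lam a ** pr n W j = pr n W j"
    if j: "j < n" and a: "a \<noteq> 0" for j a
    using Ks_aoo[OF i, of "lam a"] lamK a j unfolding aoo_iff[OF dsd] by blast+
  have Cc: "C k ** pr n W j = pr n W j ** C k" if j: "j < n" for k j
    by (rule coeff_commute[OF inf dc lam]) (use lamc j in blast)
  have Gc: "G k ** pr n W j = pr n W j ** G k" if j: "j < n" for k j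
    unfolding G
  proof (rule comm_sum, rule ballI)
    fix m
    show "E m ** C k ** E m ** pr n W j = pr n W j ** (E m ** C k ** E m)"
      using comm3[OF Ec[OF j] Cc[OF j] Ec[OF j]] .
  qed
  thus "\<forall>k j. j < n \<longrightarrow> G k ** pr n W j = pr n W j ** G k" by blast
  show "\<forall>a. a \<noteq> 0 \<longrightarrow> lcurve N D G a \<in> Ks i"
  proof (intro allI impI)
    fix a :: 'k assume a: "a \<noteq> 0"
    have inK: "lcurve N D G a \<in> K" using co(5) a by blast
    have c1: "lcurve N D G a ** pr n W j = pr n W j ** lcurve N D G a" if "j < n" for j
      using lcurve_comm Gc that by blast
    have c2: "lcurve N D G a ** pr n W j = pr n W j" if j: "j < n" and ji: "j \<noteq> i" for j
    proof -
      have "lcurve N D G a ** pr n W j = (\<Sum>m\<le>D'. E m ** lcurve N D C a ** E m ** pr n W j)"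
        using co(6) by (simp add: sum_mult_left)
      also have "\<dots> = (\<Sum>m\<le>D'. pr n W j ** E m ** E m)"
      proof (intro sum.cong refl)
        fix m
        have "E m ** lcurve N D C a ** E m ** pr n W j = E m ** (lcurve N D C a ** pr n W j) ** E m"
          using mid_move[OF Ec[OF j, of m]] .
        also have "\<dots> = E m ** pr n W j ** E m" using lamc(2)[OF j a ji] lam a by simp
        also have "\<dots> = pr n W j ** E m ** E m"
          using Ec[OF j, of m] by (simp only: matrix_mul_assoc)
        finally show "E m ** lcurve N D C a ** E m ** pr n W j = pr n W j ** E m ** E m" .
      qed
      also have "\<dots> = (\<Sum>m\<le>D'. pr n W j ** E m)"
      proof (intro sum.cong refl)
        fix m
        have "pr n W j ** E m ** E m = pr n W j ** (E m ** E m)" by (simp only: matrix_mul_assoc)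
        thus "pr n W j ** E m ** E m = pr n W j ** E m" using decompD(2)[OF de, of m m] by simp
      qed
      also have "\<dots> = pr n W j ** (\<Sum>m\<le>D'. E m)" by (simp only: sum_mult_right)
      also have "\<dots> = pr n W j" using decompD(3)[OF de] by simp
      finally show ?thesis .
    qed
    have "acts_only_on n W i (lcurve N D G a)" unfolding aoo_iff[OF dsd] using c1 c2 by blast
    thus "lcurve N D G a \<in> Ks i" using in_Ks inK i by blast
  qed
qed

lemma cochar_vals: "cocharacter M lam \<Longrightarrow> \<forall>a. a \<noteq> 0 \<longrightarrow> lam a \<in> M"
  unfolding cocharacter_def by (elim conjE)

lemma fwd:
  assumes HK: "rel_Gcr H K" and i: "i < n" and HGL: "H \<subseteq> GL"
  shows "rel_Gcr H (Ks i)"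
  unfolding rel_Gcr_def
proof (intro allI impI)
  fix lam assume asm: "cocharacter (Ks i) lam \<and> H \<subseteq> P_of lam"
  have cl: "cocharacter (Ks i) lam" and HP: "H \<subseteq> P_of lam" using asm by simp_all
  from decomp_of_cochar[OF inf cl Ks_GL[OF i]]
  obtain N D C where dc: "decomp D C" and lamC: "\<forall>a. a \<noteq> 0 \<longrightarrow> lam a = lcurve N D C a"
    by (elim exE conjE)
  have lamKs: "\<forall>a. a \<noteq> 0 \<longrightarrow> lam a \<in> Ks i" by (rule cochar_vals[OF cl])
  have sub: "Ks i \<subseteq> K" using Ks_in_K[OF i] by blast
  have clK: "cocharacter K lam" by (rule cochar_mono[OF cl sub])
  have "\<exists>mu. cocharacter K mu \<and> P_of lam = P_of mu \<and> H \<subseteq> L_of mu"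
    using HK[unfolded rel_Gcr_def, rule_format, OF conjI[OF clK HP]] .
  then obtain mu where mu: "cocharacter K mu" "P_of lam = P_of mu" "H \<subseteq> L_of mu"
    by (elim exE conjE)
  from decomp_of_cochar[OF inf mu(1) K_GL]
  obtain N' D' E where de: "decomp D' E" and muE: "\<forall>a. a \<noteq> 0 \<longrightarrow> mu a = lcurve N' D' E a"
    by (elim exE conjE)
  have muK: "\<forall>a. a \<noteq> 0 \<longrightarrow> mu a \<in> K" by (rule cochar_vals[OF mu(1)])
  define G where "G = (\<lambda>k. \<Sum>m\<le>D'. E m ** C k ** E m)"
  note cs = construct_Ks[OF i dc lamC lamKs de muE muK mu(2) G_def]
  have nuC: "\<forall>a. a \<noteq> 0 \<longrightarrow> lcurve N D G a = lcurve N D G a" by simp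
  have co: "cocharacter (Ks i) (lcurve N D G)" by (rule cochar_of_decomp[OF cs(1) cs(5)])
  have PP: "P_of lam = P_of (lcurve N D G)"
  proof (intro set_eqI)
    fix g
    show "g \<in> P_of lam \<longleftrightarrow> g \<in> P_of (lcurve N D G)"
      unfolding P_of_iff[OF inf dc lamC] P_of_iff[OF inf cs(1) nuC] using cs(2) by blast
  qed
  have HL: "H \<subseteq> L_of (lcurve N D G)"
  proof
    fix h assume h: "h \<in> H"
    have "h \<in> L_of mu" using h mu(3) by blast
    hence "\<forall>k. E k ** h = h ** E k" unfolding L_of_iff[OF inf de muE] by blast
    hence "\<forall>k. G k ** h = h ** G k" using cs(3) by blast
    moreover have "h \<in> GL" using h HGL by blast
    ultimately show "h \<in> L_of (lcurve N D G)" unfolding L_of_iff[OF inf cs(1) nuC] by blast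
  qed
  show "\<exists>mu. cocharacter (Ks i) mu \<and> P_of lam = P_of mu \<and> H \<subseteq> L_of mu"
    using co PP HL by blast
qed

lemma blk_mult:
  fixes X Y :: "nat \<Rightarrow> 'k^'n^'n"
  assumes Yc: "\<forall>i<n. \<forall>j<n. Y i ** pr n W j = pr n W j ** Y i"
  shows "(\<Sum>i<n. X i ** pr n W i) ** (\<Sum>j<n. Y j ** pr n W j) = (\<Sum>i<n. X i ** Y i ** pr n W i)"
proof -
  have "(\<Sum>i<n. X i ** pr n W i) ** (\<Sum>j<n. Y j ** pr n W j) =
      (\<Sum>i<n. \<Sum>j<n. X i ** pr n W i ** (Y j ** pr n W j))"
    by (simp only: sum_mult_left, simp only: sum_mult_right)
  also have "\<dots> = (\<Sum>i<n. \<Sum>j<n. if i = j then X i ** Y i ** pr n W i else 0)"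
  proof (intro sum.cong refl)
    fix i j assume i: "i \<in> {..<n}" and j: "j \<in> {..<n}"
    have "X i ** pr n W i ** (Y j ** pr n W j) = X i ** (pr n W i ** Y j) ** pr n W j"
      by (simp only: matrix_mul_assoc)
    also have "\<dots> = X i ** (Y j ** pr n W i) ** pr n W j"
      using Yc i j by simp
    also have "\<dots> = X i ** Y j ** (pr n W i ** pr n W j)"
      by (simp only: matrix_mul_assoc)
    also have "\<dots> = (if i = j then X i ** Y i ** pr n W i else 0)"
      using pr_orth[OF dsd, of i j] i j by simp
    finally show "X i ** pr n W i ** (Y j ** pr n W j) = (if i = j then X i ** Y i ** pr n W i else 0)" .
  qed
  also have "\<dots> = (\<Sum>i<n. X i ** Y i ** pr n W i)"
    by (intro sum.cong refl) (simp add: sum.delta)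
  finally show ?thesis .
qed

lemma sum_pr_comm:
  fixes X :: "nat \<Rightarrow> 'k^'n^'n"
  assumes "\<forall>i<n. X i ** Z = Z ** X i" "\<forall>i<n. pr n W i ** Z = Z ** pr n W i"
  shows "(\<Sum>i<n. X i ** pr n W i) ** Z = Z ** (\<Sum>i<n. X i ** pr n W i)"
proof (rule comm_sum, rule ballI)
  fix i assume "i \<in> {..<n}"
  hence i: "i < n" by simp
  have "X i ** pr n W i ** Z = X i ** (pr n W i ** Z)" by (simp only: matrix_mul_assoc)
  also have "\<dots> = (X i ** Z) ** pr n W i" using assms(2) i by (simp add: matrix_mul_assoc)
  also have "\<dots> = Z ** (X i ** pr n W i)" using assms(1) i by (simp add: matrix_mul_assoc)
  finally show "X i ** pr n W i ** Z = Z ** (X i ** pr n W i)" .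
qed

lemma cge_comm: "(\<forall>k. C k ** Z = Z ** C k) \<Longrightarrow> cge D C w ** Z = Z ** cge D C w"
  unfolding cge_def by (rule comm_sum) simp

lemma pr_comm_pr: "i < n \<Longrightarrow> j < n \<Longrightarrow> pr n W i ** pr n W j = pr n W j ** pr n W i"
  using pr_orth[OF dsd] by simp

lemma bwd:
  assumes all: "\<forall>i<n. rel_Gcr H (Ks i)" and HGL: "H \<subseteq> GL"
    and Hpres: "\<forall>h\<in>H. preserves n W h"
  shows "rel_Gcr H K"
  unfolding rel_Gcr_def
proof (intro allI impI)
  fix lam assume asm: "cocharacter K lam \<and> H \<subseteq> P_of lam"
  have cl: "cocharacter K lam" and HP: "H \<subseteq> P_of lam" using asm by simp_all
  from decomp_of_cochar[OF inf cl K_GL]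
  obtain N D0 C where dc0: "decomp D0 C" and lamC0: "\<forall>a. a \<noteq> 0 \<longrightarrow> lam a = lcurve N D0 C a"
    by (elim exE conjE)
  define D where "D = max D0 N"
  have DD: "D0 \<le> D" "N \<le> D" unfolding D_def by simp_all
  have dc: "decomp D C" using decomp_mono(1)[OF dc0 DD(1)] .
  have lamC: "\<forall>a. a \<noteq> 0 \<longrightarrow> lam a = lcurve N D C a"
    using lamC0 decomp_mono(2)[OF dc0 DD(1)] by simp
  have lamK: "\<forall>a. a \<noteq> 0 \<longrightarrow> lam a \<in> K" by (rule cochar_vals[OF cl])
  have Cc: "C k ** pr n W j = pr n W j ** C k" if j: "j < n" for k j
    by (rule coeff_commute[OF inf dc lamC]) (use lamK K_comm j in blast)
  have Hc: "h ** pr n W j = pr n W j ** h" if "h \<in> H" "j < n" for h j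
    using Hpres preserves_iff[OF dsd] that by blast
  define Ci where "Ci i k = C k ** pr n W i + (if k = N then mat 1 - pr n W i else 0)" for i k
  have Cipr: "Ci i k ** pr n W i = C k ** pr n W i" if i: "i < n" for i k
    unfolding Ci_def using pr_orth[OF dsd i i]
    by (simp add: matrix_add_rdistrib' matrix_diff_rdistrib matrix_mul_assoc[symmetric])
  have Cic: "Ci i k ** pr n W j = pr n W j ** Ci i k" if i: "i < n" and j: "j < n" for i k j
  proof -
    have r2: "pr n W j ** (C k ** Z) = C k ** (pr n W j ** Z)" for Z
      using Cc[OF j, of k] by (simp add: matrix_mul_assoc)
    show ?thesis unfolding Ci_def
      by (simp add: matrix_add_rdistrib' matrix_add_ldistrib matrix_diff_rdistrib matrix_diff_ldistrib
        matrix_mul_assoc[symmetric] r2 pr_comm_pr[OF j i])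
  qed
  have dci: "decomp D (Ci i)" if i: "i < n" for i
    unfolding decomp_def
  proof (intro conjI allI impI)
    fix k assume "D < k" thus "Ci i k = 0" unfolding Ci_def using decompD(1)[OF dc] DD by auto
  next
    fix k l
    have pp: "pr n W i ** pr n W i = pr n W i" using pr_orth[OF dsd i i] by simp
    have r1: "pr n W i ** C l = C l ** pr n W i" for l using Cc[OF i] by simp
    have r2: "pr n W i ** (C l ** Z) = C l ** (pr n W i ** Z)" for l Z using Cc[OF i] by (simp add: matrix_mul_assoc)
    have r3: "pr n W i ** (pr n W i ** Z) = pr n W i ** Z" for Z using pp by (simp add: matrix_mul_assoc)
    have r4: "C k ** (C l ** Z) = (if k = l then C k ** Z else 0)" for Z
      using decompD(2)[OF dc, of k l] by (simp add: matrix_mul_assoc)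
    show "Ci i k ** Ci i l = (if k = l then Ci i k else 0)"
      unfolding Ci_def
      by (simp add: matrix_add_ldistrib matrix_add_rdistrib' matrix_diff_ldistrib matrix_diff_rdistrib
          matrix_mul_assoc[symmetric] r1 r2 r3 r4 pp decompD(2)[OF dc])
  next
    have "(\<Sum>k\<le>D. Ci i k) = (\<Sum>k\<le>D. C k ** pr n W i) + (\<Sum>k\<le>D. if k = N then mat 1 - pr n W i else 0)"
      unfolding Ci_def by (simp add: sum.distrib)
    also have "\<dots> = pr n W i + (mat 1 - pr n W i)"
      using decompD(3)[OF dc] DD by (simp add: sum_mult_left[symmetric] sum.delta')
    finally show "(\<Sum>k\<le>D. Ci i k) = mat 1" by simp
  qed
  have lami: "lcurve N D (Ci i) a = lam a ** pr n W i + (mat 1 - pr n W i)" if i: "i < n" and a: "a \<noteq> 0" for i a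
  proof -
    have "lcurve N D (Ci i) a = (\<Sum>k\<le>D. sm (a ^ k / a ^ N) (C k) ** pr n W i) +
        (\<Sum>k\<le>D. sm (a ^ k / a ^ N) (if k = N then mat 1 - pr n W i else 0))"
      unfolding lcurve_def Ci_def by (simp add: sm_add sum.distrib)
    also have "(\<Sum>k\<le>D. sm (a ^ k / a ^ N) (C k) ** pr n W i) = lam a ** pr n W i"
      using lamC a unfolding lcurve_def by (simp add: sum_mult_left)
    also have "(\<Sum>k\<le>D. sm (a ^ k / a ^ N) (if k = N then mat 1 - pr n W i else 0)) = mat 1 - pr n W i"
    proof -
      have "(\<Sum>k\<le>D. sm (a ^ k / a ^ N) (if k = N then mat 1 - pr n W i else 0)) =
            (\<Sum>k\<le>D. if k = N then mat 1 - pr n W i else 0)"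
        using a by (intro sum.cong refl) auto
      also have "\<dots> = mat 1 - pr n W i" using DD by (simp add: sum.delta')
      finally show ?thesis .
    qed
    finally show ?thesis .
  qed
  have lamiKs: "\<forall>a. a \<noteq> 0 \<longrightarrow> lcurve N D (Ci i) a \<in> Ks i" if i: "i < n" for i
    using lami[OF i] K_factor[OF _ i] lamK by simp
  have cli: "cocharacter (Ks i) (lcurve N D (Ci i))" if i: "i < n" for i
    by (rule cochar_of_decomp[OF dci[OF i] lamiKs[OF i]])
  have refl': "\<forall>a. a \<noteq> 0 \<longrightarrow> lcurve N D (Ci i) a = lcurve N D (Ci i) a" for i by simp
  have HPi: "H \<subseteq> P_of (lcurve N D (Ci i))" if i: "i < n" for i
  proof
    fix h assume h: "h \<in> H"
    have hP: "h \<in> GL \<and> pset C h" using h HP P_of_iff[OF inf dc lamC] by blast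
    have "pset (Ci i) h" unfolding Ci_def
      by (rule pset_blockext) (use pr_orth[OF dsd i i] Hc[OF h i] Cc[OF i] hP in auto)
    thus "h \<in> P_of (lcurve N D (Ci i))" unfolding P_of_iff[OF inf dci[OF i] refl'] using hP by blast
  qed
  have ex1: "\<forall>i. \<exists>mu. i < n \<longrightarrow> (cocharacter (Ks i) mu \<and> P_of (lcurve N D (Ci i)) = P_of mu \<and> H \<subseteq> L_of mu)"
  proof
    fix i show "\<exists>mu. i < n \<longrightarrow> (cocharacter (Ks i) mu \<and> P_of (lcurve N D (Ci i)) = P_of mu \<and> H \<subseteq> L_of mu)"
    proof (cases "i < n")
      case True
      have "rel_Gcr H (Ks i)" using all True by simp
      from this[unfolded rel_Gcr_def, rule_format, OF conjI[OF cli[OF True] HPi[OF True]]]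
      show ?thesis by blast
    qed simp
  qed
  from choice[OF ex1] obtain muf where muf: "\<And>i. i < n \<Longrightarrow> cocharacter (Ks i) (muf i) \<and>
       P_of (lcurve N D (Ci i)) = P_of (muf i) \<and> H \<subseteq> L_of (muf i)" by blast
  have ex2: "\<forall>i. \<exists>t. i < n \<longrightarrow> (decomp (fst (snd t)) (snd (snd t)) \<and>
       (\<forall>a. a \<noteq> 0 \<longrightarrow> muf i a = lcurve (fst t) (fst (snd t)) (snd (snd t)) a))"
  proof
    fix i show "\<exists>t. i < n \<longrightarrow> (decomp (fst (snd t)) (snd (snd t)) \<and>
       (\<forall>a. a \<noteq> 0 \<longrightarrow> muf i a = lcurve (fst t) (fst (snd t)) (snd (snd t)) a))"
    proof (cases "i < n")
      case True
      have "cocharacter (Ks i) (muf i)" using muf[OF True] by simp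
      from decomp_of_cochar[OF inf this Ks_GL[OF True]]
      obtain N' D' E where "decomp D' E" "\<forall>a. a \<noteq> 0 \<longrightarrow> muf i a = lcurve N' D' E a"
        by (elim exE conjE)
      thus ?thesis by (intro exI[of _ "(N', D', E)"]) simp
    qed simp
  qed
  from choice[OF ex2] obtain tf where tf: "\<And>i. i < n \<Longrightarrow> decomp (fst (snd (tf i))) (snd (snd (tf i))) \<and>
       (\<forall>a. a \<noteq> 0 \<longrightarrow> muf i a = lcurve (fst (tf i)) (fst (snd (tf i))) (snd (snd (tf i))) a)" by blast
  define Nf where "Nf i = fst (tf i)" for i
  define Df where "Df i = fst (snd (tf i))" for i
  define Ef where "Ef i = snd (snd (tf i))" for i
  have de: "decomp (Df i) (Ef i)" and muE: "\<forall>a. a \<noteq> 0 \<longrightarrow> muf i a = lcurve (Nf i) (Df i) (Ef i) a"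
    if "i < n" for i using tf[OF that] unfolding Nf_def Df_def Ef_def by simp_all
  have muK: "\<forall>a. a \<noteq> 0 \<longrightarrow> muf i a \<in> K" if i: "i < n" for i
    using cochar_vals[OF conjunct1[OF muf[OF i]]] Ks_in_K[OF i] by blast
  define G where "G i = (\<lambda>k. \<Sum>m\<le>Df i. Ef i m ** Ci i k ** Ef i m)" for i
  have cs: "decomp D (G i) \<and> (\<forall>Y. pset (G i) Y \<longleftrightarrow> pset (Ci i) Y) \<and>
    (\<forall>h. (\<forall>m. Ef i m ** h = h ** Ef i m) \<longrightarrow> (\<forall>k. G i k ** h = h ** G i k)) \<and>
    (\<forall>w. cge D (Ci i) w ** cge D (G i) w = cge D (G i) w \<and> cge D (G i) w ** cge D (Ci i) w = cge D (Ci i) w) \<and>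
    (\<forall>a. a \<noteq> 0 \<longrightarrow> lcurve N D (G i) a \<in> Ks i) \<and>
    (\<forall>k j. j < n \<longrightarrow> G i k ** pr n W j = pr n W j ** G i k)" if i: "i < n" for i
  proof -
    have PP: "P_of (lcurve N D (Ci i)) = P_of (muf i)" using muf[OF i] by simp
    note c = construct_Ks[OF i dci[OF i] refl' lamiKs[OF i] de[OF i] muE[OF i] muK[OF i] PP G_def]
    show ?thesis using c(1) c(2) c(3) c(4) c(5) c(6) by (intro conjI)
  qed
  define Gt where "Gt k = (\<Sum>i<n. G i k ** pr n W i)" for k
  have Gc: "\<forall>i<n. \<forall>j<n. G i k ** pr n W j = pr n W j ** G i k" for k using cs by blast
  have dG: "decomp D Gt" unfolding decomp_def
  proof (intro conjI allI impI)
    fix k assume k: "D < k"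
    have "G i k = 0" if "i < n" for i using decompD(1)[OF conjunct1[OF cs[OF that]] k] .
    thus "Gt k = 0" unfolding Gt_def by simp
  next
    fix k l
    have "Gt k ** Gt l = (\<Sum>i<n. G i k ** G i l ** pr n W i)"
      unfolding Gt_def by (rule blk_mult[OF Gc])
    also have "\<dots> = (\<Sum>i<n. (if k = l then G i k else 0) ** pr n W i)"
      using cs decompD(2) by (intro sum.cong refl) (simp add: decompD(2)[OF conjunct1[OF cs]])
    also have "\<dots> = (if k = l then Gt k else 0)" unfolding Gt_def by simp
    finally show "Gt k ** Gt l = (if k = l then Gt k else 0)" .
  next
    have "(\<Sum>k\<le>D. Gt k) = (\<Sum>i<n. (\<Sum>k\<le>D. G i k) ** pr n W i)"
      unfolding Gt_def sum_mult_left by (rule sum.swap)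
    also have "\<dots> = (\<Sum>i<n. pr n W i)"
      by (intro sum.cong refl) (simp add: decompD(3)[OF conjunct1[OF cs]])
    also have "\<dots> = mat 1" by (rule pr_sum[OF dsd])
    finally show "(\<Sum>k\<le>D. Gt k) = mat 1" .
  qed
  have refl2: "\<forall>a. a \<noteq> 0 \<longrightarrow> lcurve N D Gt a = lcurve N D Gt a" by simp
  have nuK: "\<forall>a. a \<noteq> 0 \<longrightarrow> lcurve N D Gt a \<in> K"
  proof (intro allI impI)
    fix a :: 'k assume a: "a \<noteq> 0"
    have v: "lcurve N D Gt a = (\<Sum>i<n. lcurve N D (G i) a ** pr n W i)"
      unfolding lcurve_def Gt_def by (simp add: sm_sum sum_mult_left) (rule sum.swap)
    have ks: "\<forall>i<n. lcurve N D (G i) a \<in> Ks i" using cs a by blast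
    have ka: "\<forall>j<n. acts_only_on n W j (lcurve N D (G j) a)" using ks Ks_aoo by blast
    have "lcurve N D Gt a = prod_mats n (\<lambda>i. lcurve N D (G i) a)"
      unfolding v prod_mats_eq[OF dsd ka] ..
    hence "\<exists>ks. lcurve N D Gt a = prod_mats n ks \<and> (\<forall>i<n. ks i \<in> Ks i)" using ks by blast
    thus "lcurve N D Gt a \<in> K" unfolding Kdef by (simp only: mem_Collect_eq)
  qed
  have conu: "cocharacter K (lcurve N D Gt)" by (rule cochar_of_decomp[OF dG nuK])
  have cgeG: "cge D Gt w = (\<Sum>i<n. cge D (G i) w ** pr n W i)" for w
    unfolding cge_def Gt_def sum_mult_left by (rule sum.swap)
  have cgeC: "cge D C w = (\<Sum>i<n. cge D (Ci i) w ** pr n W i)" for w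
  proof -
    have "(\<Sum>i<n. cge D (Ci i) w ** pr n W i) = (\<Sum>i<n. cge D C w ** pr n W i)"
      unfolding cge_def sum_mult_left using Cipr by (intro sum.cong refl) simp
    also have "\<dots> = cge D C w" using expand_pr[OF dsd, of "cge D C w"] by simp
    finally show ?thesis by simp
  qed
  have cGc: "\<forall>i<n. \<forall>j<n. cge D (G i) w ** pr n W j = pr n W j ** cge D (G i) w" for w
    using cge_comm Gc by blast
  have cCc: "\<forall>i<n. \<forall>j<n. cge D (Ci i) w ** pr n W j = pr n W j ** cge D (Ci i) w" for w
    using cge_comm Cic by blast
  have rel1: "cge D C w ** cge D Gt w = cge D Gt w" for w
    unfolding cgeC cgeG blk_mult[OF cGc] using cs by (intro sum.cong refl) simp
  have rel2: "cge D Gt w ** cge D C w = cge D C w" for w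
  proof -
    have "cge D Gt w ** cge D C w = (\<Sum>i<n. cge D (G i) w ** cge D (Ci i) w ** pr n W i)"
      unfolding cgeC cgeG by (rule blk_mult[OF cCc])
    also have "\<dots> = cge D C w" unfolding cgeC using cs by (intro sum.cong refl) simp
    finally show ?thesis .
  qed
  have psq: "pset Gt Y \<longleftrightarrow> pset C Y" for Y
    unfolding pset_iff_cge[OF dc] pset_iff_cge[OF dG]
    using range_swap[of "cge D C w" "cge D Gt w" Y for w] rel1 rel2 by blast
  have PP: "P_of lam = P_of (lcurve N D Gt)"
  proof (intro set_eqI)
    fix g show "g \<in> P_of lam \<longleftrightarrow> g \<in> P_of (lcurve N D Gt)"
      unfolding P_of_iff[OF inf dc lamC] P_of_iff[OF inf dG refl2] using psq by blast
  qed
  have HL: "H \<subseteq> L_of (lcurve N D Gt)"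
  proof
    fix h assume h: "h \<in> H"
    have hc: "\<forall>k. G i k ** h = h ** G i k" if i: "i < n" for i
    proof -
      have "h \<in> L_of (muf i)" using h muf[OF i] by blast
      hence "\<forall>m. Ef i m ** h = h ** Ef i m" unfolding L_of_iff[OF inf de[OF i] muE[OF i]] by blast
      thus ?thesis using cs[OF i] by blast
    qed
    have "Gt k ** h = h ** Gt k" for k
      unfolding Gt_def by (rule sum_pr_comm) (use hc Hc[OF h] in auto)
    moreover have "h \<in> GL" using h HGL by blast
    ultimately show "h \<in> L_of (lcurve N D Gt)" unfolding L_of_iff[OF inf dG refl2] by blast
  qed
  show "\<exists>mu. cocharacter K mu \<and> P_of lam = P_of mu \<and> H \<subseteq> L_of mu"
    using conu PP HL by blast
qed

end


theorem corollary4p7: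
  fixes n :: nat
    and W :: "nat \<Rightarrow> ('k::field^'n) set"
    and H K :: "('k^'n^'n) set"
    and Ks :: "nat \<Rightarrow> ('k^'n^'n) set"
  assumes "alg_closed_field TYPE('k)"
    and "direct_sum_decomp n W"
    and "is_subgroup H" and "\<forall>h\<in>H. preserves n W h"
    and "reductive K" and "\<forall>g\<in>K. preserves n W g"
    and "\<forall>i<n. is_subgroup (Ks i) \<and> (\<forall>g\<in>Ks i. acts_only_on n W i g)"
    and "K = {prod_mats n ks | ks. \<forall>i<n. ks i \<in> Ks i}"
  shows "rel_Gcr H K \<longleftrightarrow> (\<forall>i<n. rel_Gcr H (Ks i))"
proof -
  have inf: "infinite (UNIV :: 'k set)" by (rule alg_closed_infinite[OF assms(1)])
  have cs: "closed_subgroup K" using assms(5) unfolding reductive_def by (rule conjunct1)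
  have sgK: "is_subgroup K" using cs unfolding closed_subgroup_def by (rule conjunct1)
  have "closed_in_GL K" using cs unfolding closed_subgroup_def by (rule conjunct2)
  then obtain Cz where zc: "zariski_closed Cz" and KC: "K = GL \<inter> Cz"
    unfolding closed_in_GL_def by blast
  have HGL: "H \<subseteq> GL" using assms(3) unfolding is_subgroup_def by (rule conjunct1)
  show ?thesis
  proof
    assume h: "rel_Gcr H K"
    show "\<forall>i<n. rel_Gcr H (Ks i)"
      using fwd[OF inf assms(2) sgK zc KC assms(6) assms(7) assms(8) h _ HGL] by blast
  next
    assume h: "\<forall>i<n. rel_Gcr H (Ks i)"
    show "rel_Gcr H K"
      by (rule bwd[OF inf assms(2) sgK zc KC assms(6) assms(7) assms(8) h HGL assms(4)])
  qed
qed

end
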